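(* Fix an integer $n\ge 0$ and $\mathbb K\in\{\mathbb R,\mathbb C\}$. Let $\mathcal B^0\supset\mathcal B^1\supset\cdots\supset\mathcal B^{n+1}$ be linear subspaces and let $\mathcal L=\mathcal L_0,\dots,\mathcal L_n$, $\mathcal L(\epsilon,\cdot)$ ($\epsilon\in(0,1)$) be linear operators satisfying conditions (I), (II), (IV) of the context. Assume also: (a) each $\mathcal B^k$ is a Banach space; (b) $\nu$ is a bounded linear functional on $\mathcal B^0$; $\mathcal L_j$ is bounded $\mathcal B^i\to\mathcal B^{i-j}$ and $\sup_{\epsilon}\|\tilde{\mathcal L}_j(\epsilon,\cdot)\|_{\mathcal B^i\to\mathcal B^{i-j}}<+\infty$ for $j=0,\dots,n$ and $i=j,\dots,n+1$; $\sup_\epsilon\|g(\epsilon,\cdot)\|_{\mathcal B^i}<+\infty$ for $i=0,\dots,n+1$; $\mathcal R_\lambda$ is bounded $\mathcal B^1\to\mathcal B^0$ and bounded on $\mathcal B^i$ for $i=1,\dots,n+1$; and $\mathcal R_\lambda:\mathcal B^1\to\mathcal B^0$ is weak bounded; (c) $\lim_{\epsilon\to0}\|\tilde{\mathcal L}_j(\epsilon,\cdot)\|_{\mathcal B^{i+1}\to\mathcal B^{i-j}}=0$ for each $j=0,\dots,n$ and $i=j,\dots,n$. Then $\|\tilde g_n(\epsilon,\cdot)\|_{\mathcal B^0}\to0$ as $\epsilon\to0$. In particular, $\|\tilde g_k(\epsilon,\cdot)\|_{\mathcal B^i}\to0$ for $k,i\ge0$ with $k+i\le n$, and $\sup_{\epsilon}\|\tilde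 g_k(\epsilon,\cdot)\|_{\mathcal B^{n+1-k}}<\infty$ for $k=0,\dots,n$.
   Context: Conditions. (I) For each $j=0,\dots,n$ and $i=j,\dots,n$, $\mathcal L_j$ maps $\mathcal B^i$ linearly into $\mathcal B^{i-j}$. (II) $\mathcal L:\mathcal B^0\to\mathcal B^0$ decomposes as $\mathcal L=\lambda(h\otimes\nu)+\mathcal R$ with $(\lambda,h,\nu)\in\mathbb K\times\mathcal B^{n+1}\times(\mathcal B^0)^*$ ($(\mathcal B^0)^*$ = linear functionals), $\lambda\neq0$, $\nu\circ\mathcal L=\lambda\nu$, $\mathcal Lh=\lambda h$, $\nu(h)=1$, where $(h\otimes\nu)f=\nu(f)h$; and there is a linear subspace $\mathcal D^0$ with $\mathcal B^1\subset\mathcal D^0\subset\mathcal B^0$ such that every $f\in\mathcal D^0$ has exactly one $g\in\mathcal B^0$ with $(\mathcal R-\lambda\mathcal I)g=f$; this inverse $\mathcal R_\lambda:\mathcal D^0\to\mathcal B^0$ satisfies $\mathcal R_\lambda\mathcal B^i\subset\mathcal B^i$ for $1\le i\le n+1$. (IV) For each $\epsilon\in(0,1)$, $\mathcal L(\epsilon,\cdot)$ maps $\mathcal B^{n+1}$ into $\mathcal B^0$ and there are $\lambda(\epsilon)\in\mathbb K$, $h(\epsilon,\cdot)\in\mathcal B^{n+1}$ with $\mathcal L(\epsilon,h(\epsilon,\cdot))=\lambda(\epsilon)h(\epsilon,\cdot)$ and $\nu(h(\epsilon,\cdot))\ne0$. Notation. $\tilde{\mathcal L}_j(\epsilon,\cdot):=(\mathcal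 L(\epsilon,\cdot)-\mathcal L-\sum_{i=1}^j\mathcal L_i\epsilon^i)/\epsilon^j$; $\mathcal P=h\otimes\nu$; $\mathcal S:=\mathcal R_\lambda(\mathcal I-\mathcal P)$; $g(\epsilon,\cdot):=h(\epsilon,\cdot)/\nu(h(\epsilon,\cdot))$. Coefficients: $g_0=h$ and recursively $\lambda_k=\sum_{j=1}^k\nu(\mathcal L_jg_{k-j})$, $g_k=\sum_{j=1}^k\mathcal S(\lambda_j\mathcal I-\mathcal L_j)g_{k-j}$ for $k=1,\dots,n$. Remainders: $\tilde g_k(\epsilon,\cdot):=(g(\epsilon,\cdot)-\sum_{i=0}^k g_i\epsilon^i)/\epsilon^k$ for $0\le k\le n$. An operator $\mathcal A:\mathcal B^1\to\mathcal B^0$ is weak bounded if for every $\eta>0$ there is $c(\eta)>0$ with $\|\mathcal Af\|_{\mathcal B^0}\le c(\eta)\|f\|_{\mathcal B^0}+\eta\|f\|_{\mathcal B^1}$ for all $f\in\mathcal B^1$. *)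

theory Defs
  imports Complex_Main
begin

text \<open>Abstract setting: an ambient vector space 'v over a scalar field 'k
(with 'k :: real_normed_field, i.e. R or C), scalar action scale.
Subspaces B k carry their own norms N k.\<close>

definition is_norm_on :: "('k::real_normed_field \<Rightarrow> 'v::ab_group_add \<Rightarrow> 'v) \<Rightarrow> 'v set \<Rightarrow> ('v \<Rightarrow> real) \<Rightarrow> bool" where
  "is_norm_on scale X N \<longleftrightarrow>
     (\<forall>x\<in>X. N x \<ge> 0) \<and> (\<forall>x\<in>X. N x = 0 \<longrightarrow> x = 0) \<and>
     (\<forall>x\<in>X. \<forall>y\<in>X. N (x + y) \<le> N x + N y) \<and>
     (\<forall>c. \<forall>x\<in>X. N (scale c x) = norm c * N x)"

definition banach_on :: "('k::real_normed_field \<Rightarrow> 'v::ab_group_add \<Rightarrow> 'v) \<Rightarrow> 'v set \<Rightarrow> ('v \<Rightarrow> real) \<Rightarrow> bool" where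
  "banach_on scale X N \<longleftrightarrow> module.subspace scale X \<and> is_norm_on scale X N \<and>
     (\<forall>s::nat \<Rightarrow> 'v. (\<forall>k. s k \<in> X) \<longrightarrow>
        (\<forall>e>0. \<exists>M. \<forall>m\<ge>M. \<forall>k\<ge>M. N (s m - s k) < e) \<longrightarrow>
        (\<exists>x\<in>X. (\<lambda>k. N (s k - x)) \<longlonglongrightarrow> 0))"

definition lin_on :: "('k::field \<Rightarrow> 'v::ab_group_add \<Rightarrow> 'v) \<Rightarrow> 'v set \<Rightarrow> ('v \<Rightarrow> 'v) \<Rightarrow> bool" where
  "lin_on scale X A \<longleftrightarrow> (\<forall>x\<in>X. \<forall>y\<in>X. A (x + y) = A x + A y) \<and>
     (\<forall>c. \<forall>x\<in>X. A (scale c x) = scale c (A x))"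

definition lin_fun_on :: "('k::field \<Rightarrow> 'v::ab_group_add \<Rightarrow> 'v) \<Rightarrow> 'v set \<Rightarrow> ('v \<Rightarrow> 'k) \<Rightarrow> bool" where
  "lin_fun_on scale X f \<longleftrightarrow> (\<forall>x\<in>X. \<forall>y\<in>X. f (x + y) = f x + f y) \<and>
     (\<forall>c. \<forall>x\<in>X. f (scale c x) = c * f x)"

definition maps_into :: "'v set \<Rightarrow> 'v set \<Rightarrow> ('v \<Rightarrow> 'v) \<Rightarrow> bool" where
  "maps_into X Y A \<longleftrightarrow> (\<forall>x\<in>X. A x \<in> Y)"

definition op_norm_le :: "('v \<Rightarrow> real) \<Rightarrow> 'v set \<Rightarrow> ('v \<Rightarrow> real) \<Rightarrow> ('v \<Rightarrow> 'v) \<Rightarrow> real \<Rightarrow> bool" where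
  "op_norm_le N1 X N2 A C \<longleftrightarrow> (\<forall>x\<in>X. N2 (A x) \<le> C * N1 x)"

definition bounded_op :: "('v \<Rightarrow> real) \<Rightarrow> 'v set \<Rightarrow> ('v \<Rightarrow> real) \<Rightarrow> 'v set \<Rightarrow> ('v \<Rightarrow> 'v) \<Rightarrow> bool" where
  "bounded_op N1 X N2 Y A \<longleftrightarrow> maps_into X Y A \<and> (\<exists>C. op_norm_le N1 X N2 A C)"

definition weak_bounded :: "('v \<Rightarrow> real) \<Rightarrow> ('v \<Rightarrow> real) \<Rightarrow> 'v set \<Rightarrow> ('v \<Rightarrow> 'v) \<Rightarrow> bool" where
  "weak_bounded N0 N1 B1 A \<longleftrightarrow>
     (\<forall>\<eta>>0. \<exists>c>0. \<forall>f\<in>B1. N0 (A f) \<le> c * N0 f + \<eta> * N1 f)"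

text \<open>Remainder operator tilde L_j(eps,.), with Ls 0 = L.\<close>
definition Ltil :: "('k::real_normed_field \<Rightarrow> 'v::ab_group_add \<Rightarrow> 'v) \<Rightarrow> (real \<Rightarrow> 'v \<Rightarrow> 'v) \<Rightarrow> (nat \<Rightarrow> 'v \<Rightarrow> 'v)
     \<Rightarrow> nat \<Rightarrow> real \<Rightarrow> 'v \<Rightarrow> 'v" where
  "Ltil scale Leps Ls j \<epsilon> x = scale (of_real (1 / \<epsilon> ^ j))
      (Leps \<epsilon> x - Ls 0 x - (\<Sum>i=1..j. scale (of_real (\<epsilon> ^ i)) (Ls i x)))"

text \<open>The list [g_0, ..., g_k] of coefficients, with S the operator R_lambda (I - P).\<close>
fun glist :: "('k::real_normed_field \<Rightarrow> 'v::ab_group_add \<Rightarrow> 'v) \<Rightarrow> (nat \<Rightarrow> 'v \<Rightarrow> 'v) \<Rightarrow> ('v \<Rightarrow> 'k)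
     \<Rightarrow> ('v \<Rightarrow> 'v) \<Rightarrow> 'v \<Rightarrow> nat \<Rightarrow> 'v list" where
  "glist scale Ls \<nu> S h 0 = [h]"
| "glist scale Ls \<nu> S h (Suc k) =
     (let gs = glist scale Ls \<nu> S h k;
          lamf = (\<lambda>m. \<Sum>i=1..m. \<nu> (Ls i (gs ! (m - i))))
      in gs @ [\<Sum>j=1..Suc k. S (scale (lamf j) (gs ! (Suc k - j)) - Ls j (gs ! (Suc k - j)))])"

definition gcoef :: "('k::real_normed_field \<Rightarrow> 'v::ab_group_add \<Rightarrow> 'v) \<Rightarrow> (nat \<Rightarrow> 'v \<Rightarrow> 'v) \<Rightarrow> ('v \<Rightarrow> 'k)
     \<Rightarrow> ('v \<Rightarrow> 'v) \<Rightarrow> 'v \<Rightarrow> nat \<Rightarrow> 'v" where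
  "gcoef scale Ls \<nu> S h k = glist scale Ls \<nu> S h k ! k"

definition lamcoef :: "('k::real_normed_field \<Rightarrow> 'v::ab_group_add \<Rightarrow> 'v) \<Rightarrow> (nat \<Rightarrow> 'v \<Rightarrow> 'v) \<Rightarrow> ('v \<Rightarrow> 'k)
     \<Rightarrow> ('v \<Rightarrow> 'v) \<Rightarrow> 'v \<Rightarrow> nat \<Rightarrow> 'k" where
  "lamcoef scale Ls \<nu> S h k = (\<Sum>j=1..k. \<nu> (Ls j (gcoef scale Ls \<nu> S h (k - j))))"

definition gtil :: "('k::real_normed_field \<Rightarrow> 'v::ab_group_add \<Rightarrow> 'v) \<Rightarrow> (real \<Rightarrow> 'v) \<Rightarrow> (nat \<Rightarrow> 'v)
     \<Rightarrow> nat \<Rightarrow> real \<Rightarrow> 'v" where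
  "gtil scale g gc k \<epsilon> = scale (of_real (1 / \<epsilon> ^ k)) (g \<epsilon> - (\<Sum>i=0..k. scale (of_real (\<epsilon> ^ i)) (gc i)))"

end

theory Submission
  imports Defs
begin

locale ctx =
  fixes scale :: "'k::real_normed_field \<Rightarrow> 'v::ab_group_add \<Rightarrow> 'v"
    and n :: nat
    and B :: "nat \<Rightarrow> 'v set" and N :: "nat \<Rightarrow> 'v \<Rightarrow> real"
    and Ls :: "nat \<Rightarrow> 'v \<Rightarrow> 'v" and Leps :: "real \<Rightarrow> 'v \<Rightarrow> 'v"
    and lam :: 'k and h :: 'v and \<nu> :: "'v \<Rightarrow> 'k"
    and D0 :: "'v set" and Rl :: "'v \<Rightarrow> 'v"
    and lameps :: "real \<Rightarrow> 'k" and heps :: "real \<Rightarrow> 'v"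
    assumes vs: "vector_space scale"
    and nested: "\<forall>k\<le>n. B (Suc k) \<subseteq> B k"
    and banach: "\<forall>k\<le>Suc n. banach_on scale (B k) (N k)"
    and condI: "\<forall>j\<le>n. \<forall>i. j \<le> i \<and> i \<le> n \<longrightarrow>
                  maps_into (B i) (B (i - j)) (Ls j) \<and> lin_on scale (B i) (Ls j)"
    and L_lin: "lin_on scale (B 0) (Ls 0)"
    and lam_nz: "lam \<noteq> 0"
    and h_in: "h \<in> B (Suc n)"
    and nu_lin: "lin_fun_on scale (B 0) \<nu>"
    and nu_eig: "\<forall>f\<in>B 0. \<nu> (Ls 0 f) = lam * \<nu> f"
    and h_eig: "Ls 0 h = scale lam h"
    and nu_h: "\<nu> h = 1"
    and D0_sub: "module.subspace scale D0"
    and D0_between: "B 1 \<subseteq> D0" "D0 \<subseteq> B 0"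
    and Rl_sol: "\<forall>f\<in>D0. Rl f \<in> B 0 \<and>
                   (Ls 0 (Rl f) - scale lam (scale (\<nu> (Rl f)) h)) - scale lam (Rl f) = f"
    and Rl_uniq: "\<forall>f\<in>D0. \<forall>g\<in>B 0.
                   (Ls 0 g - scale lam (scale (\<nu> g) h)) - scale lam g = f \<longrightarrow> g = Rl f"
    and Rl_inv: "\<forall>i. 1 \<le> i \<and> i \<le> Suc n \<longrightarrow> maps_into (B i) (B i) Rl"
    and Leps_lin: "\<forall>\<epsilon>\<in>{0<..<1}. maps_into (B 0) (B 0) (Leps \<epsilon>) \<and> lin_on scale (B 0) (Leps \<epsilon>)"
    and heps_in: "\<forall>\<epsilon>\<in>{0<..<1}. heps \<epsilon> \<in> B (Suc n)"
    and heps_eig: "\<forall>\<epsilon>\<in>{0<..<1}. Leps \<epsilon> (heps \<epsilon>) = scale (lameps \<epsilon>) (heps \<epsilon>)"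
    and nu_heps: "\<forall>\<epsilon>\<in>{0<..<1}. \<nu> (heps \<epsilon>) \<noteq> 0"
    and nu_bdd: "\<exists>C. \<forall>x\<in>B 0. norm (\<nu> x) \<le> C * N 0 x"
    and Lj_bdd: "\<forall>j\<le>n. \<forall>i. j \<le> i \<and> i \<le> Suc n \<longrightarrow>
                   bounded_op (N i) (B i) (N (i - j)) (B (i - j)) (Ls j)"
    and Ltil_bdd: "\<forall>j\<le>n. \<forall>i. j \<le> i \<and> i \<le> Suc n \<longrightarrow>
                   (\<exists>C. \<forall>\<epsilon>\<in>{0<..<1}. maps_into (B i) (B (i - j)) (Ltil scale Leps Ls j \<epsilon>) \<and>
                        op_norm_le (N i) (B i) (N (i - j)) (Ltil scale Leps Ls j \<epsilon>) C)"
    and g_bdd: "\<forall>i\<le>Suc n. \<exists>C. \<forall>\<epsilon>\<in>{0<..<1}.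
                   N i (scale (inverse (\<nu> (heps \<epsilon>))) (heps \<epsilon>)) \<le> C"
    and Rl_bdd10: "bounded_op (N 1) (B 1) (N 0) (B 0) Rl"
    and Rl_bdd: "\<forall>i. 1 \<le> i \<and> i \<le> Suc n \<longrightarrow> bounded_op (N i) (B i) (N i) (B i) Rl"
    and Rl_weak: "weak_bounded (N 0) (N 1) (B 1) Rl"
    and Ltil_lim: "\<forall>j\<le>n. \<forall>i. j \<le> i \<and> i \<le> n \<longrightarrow>
                   (\<forall>\<^sub>F \<epsilon> in at_right 0. maps_into (B (Suc i)) (B (i - j)) (Ltil scale Leps Ls j \<epsilon>)) \<and>
                   (\<forall>\<eta>>0. \<forall>\<^sub>F \<epsilon> in at_right 0.
                        op_norm_le (N (Suc i)) (B (Suc i)) (N (i - j)) (Ltil scale Leps Ls j \<epsilon>) \<eta>)"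

begin

sublocale vector_space scale by (rule vs)

lemma sub: "k \<le> Suc n \<Longrightarrow> subspace (B k)"
  using banach by (auto simp: banach_on_def)

lemma nrm: "k \<le> Suc n \<Longrightarrow> is_norm_on scale (B k) (N k)"
  using banach by (auto simp: banach_on_def)

lemma nest: "a \<le> b \<Longrightarrow> b \<le> Suc n \<Longrightarrow> B b \<subseteq> B a"
proof (induction b)
  case 0 then show ?case by simp
next
  case (Suc b)
  show ?case
  proof (cases "a = Suc b")
    case False
    then have "a \<le> b" using Suc by simp
    then show ?thesis using Suc nested by force
  qed simp
qed

lemma memB: "x \<in> B b \<Longrightarrow> a \<le> b \<Longrightarrow> b \<le> Suc n \<Longrightarrow> x \<in> B a"
  using nest by blast

lemma N_nn: "k \<le> Suc n \<Longrightarrow> x \<in> B k \<Longrightarrow> 0 \<le> N k x"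
  using nrm by (auto simp: is_norm_on_def)

lemma N_tri: "k \<le> Suc n \<Longrightarrow> x \<in> B k \<Longrightarrow> y \<in> B k \<Longrightarrow> N k (x + y) \<le> N k x + N k y"
  using nrm by (auto simp: is_norm_on_def)

lemma N_sc: "k \<le> Suc n \<Longrightarrow> x \<in> B k \<Longrightarrow> N k (scale c x) = norm c * N k x"
  using nrm by (auto simp: is_norm_on_def)

lemma neg_scale: "- x = scale (-1) x"
  by simp

lemma N_neg: "k \<le> Suc n \<Longrightarrow> x \<in> B k \<Longrightarrow> N k (- x) = N k x"
  by (simp only: neg_scale N_sc) simp

lemma N_diff: "k \<le> Suc n \<Longrightarrow> x \<in> B k \<Longrightarrow> y \<in> B k \<Longrightarrow> N k (x - y) \<le> N k x + N k y"
proof -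
  assume a: "k \<le> Suc n" "x \<in> B k" "y \<in> B k"
  have "N k (x + - y) \<le> N k x + N k (- y)"
    using a sub subspace_neg by (intro N_tri) auto
  then show ?thesis using a N_neg by simp
qed

lemma lin_add: "lin_on scale X A \<Longrightarrow> x \<in> X \<Longrightarrow> y \<in> X \<Longrightarrow> A (x + y) = A x + A y"
  by (simp add: lin_on_def)

lemma lin_scale: "lin_on scale X A \<Longrightarrow> x \<in> X \<Longrightarrow> A (scale c x) = scale c (A x)"
  by (simp add: lin_on_def)

lemma lin_neg: "lin_on scale X A \<Longrightarrow> x \<in> X \<Longrightarrow> A (- x) = - A x"
  by (simp only: neg_scale lin_scale)

lemma lin_diff: "lin_on scale X A \<Longrightarrow> subspace X \<Longrightarrow> x \<in> X \<Longrightarrow> y \<in> X \<Longrightarrow> A (x - y) = A x - A y"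
  using lin_add[of X A x "- y"] lin_neg[of X A y] subspace_neg[of X y] by simp

lemma lin_zero: "lin_on scale X A \<Longrightarrow> subspace X \<Longrightarrow> A 0 = 0"
  using lin_scale[of X A 0 0] subspace_0[of X] by simp

lemma lin_sum: "lin_on scale X A \<Longrightarrow> subspace X \<Longrightarrow> (\<And>a. a \<in> I \<Longrightarrow> f a \<in> X) \<Longrightarrow>
   A (\<Sum>a\<in>I. f a) = (\<Sum>a\<in>I. A (f a))"
proof (induction I rule: infinite_finite_induct)
  case (infinite A) then show ?case using lin_zero by simp
next
  case empty then show ?case using lin_zero by simp
next
  case (insert x F)
  then show ?case by (simp add: lin_add subspace_sum)
qed

lemma lf_add: "lin_fun_on scale X f \<Longrightarrow> x \<in> X \<Longrightarrow> y \<in> X \<Longrightarrow> f (x + y) = f x + f y"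
  by (simp add: lin_fun_on_def)

lemma lf_scale: "lin_fun_on scale X f \<Longrightarrow> x \<in> X \<Longrightarrow> f (scale c x) = c * f x"
  by (simp add: lin_fun_on_def)

lemma lf_neg: "lin_fun_on scale X f \<Longrightarrow> x \<in> X \<Longrightarrow> f (- x) = - f x"
  by (simp only: neg_scale lf_scale) simp

lemma lf_diff: "lin_fun_on scale X f \<Longrightarrow> subspace X \<Longrightarrow> x \<in> X \<Longrightarrow> y \<in> X \<Longrightarrow> f (x - y) = f x - f y"
  using lf_add[of X f x "- y"] lf_neg[of X f y] subspace_neg[of X y] by simp

lemma lf_zero: "lin_fun_on scale X f \<Longrightarrow> subspace X \<Longrightarrow> f 0 = 0"
  using lf_scale[of X f 0 0] subspace_0[of X] by simp

lemma lf_sum: "lin_fun_on scale X f \<Longrightarrow> subspace X \<Longrightarrow> (\<And>a. a \<in> I \<Longrightarrow> g a \<in> X) \<Longrightarrow>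
   f (\<Sum>a\<in>I. g a) = (\<Sum>a\<in>I. f (g a))"
proof (induction I rule: infinite_finite_induct)
  case (infinite A) then show ?case using lf_zero by simp
next
  case empty then show ?case using lf_zero by simp
next
  case (insert x F)
  then show ?case by (simp add: lf_add subspace_sum)
qed

lemma B0: "subspace (B 0)" using sub by simp

lemma nu_add: "x \<in> B 0 \<Longrightarrow> y \<in> B 0 \<Longrightarrow> \<nu> (x + y) = \<nu> x + \<nu> y"
  using lf_add[OF nu_lin] .
lemma nu_scale: "x \<in> B 0 \<Longrightarrow> \<nu> (scale c x) = c * \<nu> x"
  using lf_scale[OF nu_lin] .
lemma nu_diff: "x \<in> B 0 \<Longrightarrow> y \<in> B 0 \<Longrightarrow> \<nu> (x - y) = \<nu> x - \<nu> y"
  using lf_diff[OF nu_lin B0] .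
lemma nu_sum: "(\<And>a. a \<in> I \<Longrightarrow> g a \<in> B 0) \<Longrightarrow> \<nu> (\<Sum>a\<in>I. g a) = (\<Sum>a\<in>I. \<nu> (g a))"
  using lf_sum[OF nu_lin B0] .

lemma Ls_lin: "j \<le> n \<Longrightarrow> j \<le> i \<Longrightarrow> i \<le> Suc n \<Longrightarrow> lin_on scale (B i) (Ls j)"
proof -
  assume a: "j \<le> n" "j \<le> i" "i \<le> Suc n"
  show ?thesis
  proof (cases "i \<le> n")
    case True then show ?thesis using condI a by blast
  next
    case False
    then have "i = Suc n" using a by simp
    moreover have "lin_on scale (B n) (Ls j)" using condI a by blast
    moreover have "B (Suc n) \<subseteq> B n" using nest[of n "Suc n"] by simp
    ultimately show ?thesis unfolding lin_on_def by (metis subsetD)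
  qed
qed

lemma Ls_maps: "j \<le> n \<Longrightarrow> j \<le> i \<Longrightarrow> i \<le> Suc n \<Longrightarrow> x \<in> B i \<Longrightarrow> Ls j x \<in> B (i - j)"
  using Lj_bdd by (auto simp: bounded_op_def maps_into_def)

lemma Ls_bd: "j \<le> n \<Longrightarrow> j \<le> i \<Longrightarrow> i \<le> Suc n \<Longrightarrow> \<exists>C. \<forall>x\<in>B i. N (i - j) (Ls j x) \<le> C * N i x"
  using Lj_bdd by (auto simp: bounded_op_def op_norm_le_def)


definition SS where "SS f = Rl (f - scale (\<nu> f) h)"
definition gc where "gc m = gcoef scale Ls \<nu> SS h m"
definition lc where "lc m = lamcoef scale Ls \<nu> SS h m"

lemma glist_len: "length (glist scale Ls \<nu> SS h k) = Suc k"
  by (induction k) (simp_all add: Let_def)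

lemma glist_nth: "m \<le> k \<Longrightarrow> glist scale Ls \<nu> SS h k ! m = gc m"
proof (induction k)
  case 0 then show ?case by (simp add: gc_def gcoef_def)
next
  case (Suc k)
  show ?case
  proof (cases "m = Suc k")
    case True then show ?thesis by (simp add: gc_def gcoef_def)
  next
    case False
    then have "m \<le> k" using Suc by simp
    then show ?thesis using Suc glist_len[of k] by (simp add: Let_def nth_append)
  qed
qed

lemma gc_0: "gc 0 = h" by (simp add: gc_def gcoef_def)

lemma lc_def': "lc m = (\<Sum>j=1..m. \<nu> (Ls j (gc (m - j))))"
  by (simp add: lc_def lamcoef_def gc_def)

lemma gc_Suc: "gc (Suc k) = (\<Sum>j=1..Suc k. SS (scale (lc j) (gc (Suc k - j)) - Ls j (gc (Suc k - j))))"
proof -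
  let ?gs = "glist scale Ls \<nu> SS h k"
  have "gc (Suc k) = (\<Sum>j=1..Suc k. SS (scale (\<Sum>i=1..j. \<nu> (Ls i (?gs ! (j - i)))) (?gs ! (Suc k - j))
      - Ls j (?gs ! (Suc k - j))))"
    by (simp add: gc_def gcoef_def Let_def nth_append glist_len)
  also have "\<dots> = (\<Sum>j=1..Suc k. SS (scale (lc j) (gc (Suc k - j)) - Ls j (gc (Suc k - j))))"
  proof (rule sum.cong[OF refl])
    fix j assume j: "j \<in> {1..Suc k}"
    have "(\<Sum>i=1..j. \<nu> (Ls i (?gs ! (j - i)))) = lc j"
      unfolding lc_def'
    proof (intro sum.cong refl)
      fix i assume "i \<in> {1..j}"
      then have "j - i \<le> k" using j by auto
      then show "\<nu> (Ls i (?gs ! (j - i))) = \<nu> (Ls i (gc (j - i)))" by (simp add: glist_nth)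
    qed
    moreover have "?gs ! (Suc k - j) = gc (Suc k - j)" using j by (intro glist_nth) auto
    ultimately show "SS (scale (\<Sum>i=1..j. \<nu> (Ls i (?gs ! (j - i)))) (?gs ! (Suc k - j))
      - Ls j (?gs ! (Suc k - j))) = SS (scale (lc j) (gc (Suc k - j)) - Ls j (gc (Suc k - j)))"
      by simp
  qed
  finally show ?thesis .
qed

definition TT where "TT x = (Ls 0 x - scale lam (scale (\<nu> x) h)) - scale lam x"

lemma h_B: "i \<le> Suc n \<Longrightarrow> h \<in> B i" using h_in memB by blast

lemma L0_B: "x \<in> B 0 \<Longrightarrow> Ls 0 x \<in> B 0"
  using condI by (auto simp: maps_into_def)

lemma TT_Rl: "f \<in> D0 \<Longrightarrow> TT (Rl f) = f" and Rl_B0: "f \<in> D0 \<Longrightarrow> Rl f \<in> B 0"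
  using Rl_sol by (auto simp: TT_def)

lemma Rl_eq: "x \<in> B 0 \<Longrightarrow> f \<in> D0 \<Longrightarrow> TT x = f \<Longrightarrow> x = Rl f"
  using Rl_uniq by (auto simp: TT_def)

lemma TT_add: "x \<in> B 0 \<Longrightarrow> y \<in> B 0 \<Longrightarrow> TT (x + y) = TT x + TT y"
  by (simp add: TT_def lin_add[OF L_lin] nu_add algebra_simps)

lemma TT_scale: "x \<in> B 0 \<Longrightarrow> TT (scale c x) = scale c (TT x)"
  by (simp add: TT_def lin_scale[OF L_lin] nu_scale algebra_simps mult.commute)

lemma D0B0: "f \<in> D0 \<Longrightarrow> f \<in> B 0" using D0_between by blast
lemma BD0: "i \<le> Suc n \<Longrightarrow> 1 \<le> i \<Longrightarrow> f \<in> B i \<Longrightarrow> f \<in> D0" using D0_between memB[of f i 1] by blast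

lemma Rl_add: "f \<in> D0 \<Longrightarrow> f' \<in> D0 \<Longrightarrow> Rl (f + f') = Rl f + Rl f'"
  by (rule sym, rule Rl_eq) (auto simp: TT_add TT_Rl Rl_B0 subspace_add[OF B0] subspace_add[OF D0_sub])

lemma Rl_scale: "f \<in> D0 \<Longrightarrow> Rl (scale c f) = scale c (Rl f)"
  by (rule sym, rule Rl_eq) (auto simp: TT_scale TT_Rl Rl_B0 subspace_scale[OF B0] subspace_scale[OF D0_sub])

lemma Rl_diff: "f \<in> D0 \<Longrightarrow> f' \<in> D0 \<Longrightarrow> Rl (f - f') = Rl f - Rl f'"
proof -
  assume a: "f \<in> D0" "f' \<in> D0"
  have "Rl (f + scale (-1) f') = Rl f + Rl (scale (-1) f')"
    using a by (intro Rl_add) (auto simp: subspace_scale[OF D0_sub] subspace_neg[OF D0_sub])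
  then show ?thesis using Rl_scale[OF a(2), of "-1"] by simp
qed

lemma Rl_zero: "Rl 0 = 0"
  using Rl_scale[of 0 0] subspace_0[OF D0_sub] by simp

lemma Rl_sum: "(\<And>a. a \<in> I \<Longrightarrow> f a \<in> D0) \<Longrightarrow> Rl (\<Sum>a\<in>I. f a) = (\<Sum>a\<in>I. Rl (f a))"
proof (induction I rule: infinite_finite_induct)
  case (infinite A) then show ?case using Rl_zero by simp
next
  case empty then show ?case using Rl_zero by simp
next
  case (insert x F)
  then show ?case by (simp add: Rl_add subspace_sum[OF D0_sub])
qed

lemma nu_TT: "x \<in> B 0 \<Longrightarrow> \<nu> (TT x) = - lam * \<nu> x"
proof -
  assume x: "x \<in> B 0"
  have a: "Ls 0 x \<in> B 0" "scale lam (scale (\<nu> x) h) \<in> B 0" "scale lam x \<in> B 0"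
    using x L0_B h_B subspace_scale[OF B0] by auto
  have "\<nu> (TT x) = \<nu> (Ls 0 x) - \<nu> (scale lam (scale (\<nu> x) h)) - \<nu> (scale lam x)"
    unfolding TT_def using a by (simp add: nu_diff subspace_diff[OF B0])
  also have "\<dots> = - lam * \<nu> x"
    using x nu_eig h_B[of 0] by (simp add: nu_scale subspace_scale[OF B0] nu_h)
  finally show ?thesis .
qed

lemma nu_Rl: "f \<in> D0 \<Longrightarrow> \<nu> (Rl f) = - \<nu> f / lam"
  using nu_TT[OF Rl_B0, of f] TT_Rl[of f] lam_nz by (simp add: field_simps)

lemma SS_B: "1 \<le> i \<Longrightarrow> i \<le> Suc n \<Longrightarrow> f \<in> B i \<Longrightarrow> SS f \<in> B i"
proof -
  assume a: "1 \<le> i" "i \<le> Suc n" "f \<in> B i"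
  have "f - scale (\<nu> f) h \<in> B i" using a h_B sub subspace_diff subspace_scale by metis
  then show ?thesis using Rl_inv a by (auto simp: SS_def maps_into_def)
qed

lemma nu_SS: "f \<in> D0 \<Longrightarrow> \<nu> (SS f) = 0"
proof -
  assume f: "f \<in> D0"
  have fB: "f \<in> B 0" using f D0B0 by blast
  have hB: "scale (\<nu> f) h \<in> B 0" using h_B[of 0] subspace_scale[OF B0] by simp
  have "f - scale (\<nu> f) h \<in> D0" using f BD0[of 1 h] h_in memB D0_sub
    by (metis One_nat_def Suc_le_mono le0 le_refl subspace_diff subspace_scale)
  then have "\<nu> (SS f) = - \<nu> (f - scale (\<nu> f) h) / lam" by (simp add: SS_def nu_Rl)
  also have "\<dots> = 0" using fB hB h_B[of 0] by (simp add: nu_diff nu_scale nu_h)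
  finally show ?thesis .
qed


definition yy where "yy m = (\<Sum>j=1..m. scale (lc j) (gc (m - j)) - Ls j (gc (m - j)))"

lemma summand_B:
  assumes "1 \<le> j" "j \<le> m" "m \<le> n" "gc (m - j) \<in> B (Suc n - (m - j))"
  shows "scale c (gc (m - j)) - Ls j (gc (m - j)) \<in> B (Suc n - m)"
proof -
  have e: "Suc n - (m - j) = (Suc n - m) + j" using assms by simp
  have "gc (m - j) \<in> B (Suc n - m)" using assms(4) memB[of _ "Suc n - (m - j)" "Suc n - m"] by simp
  moreover have "Ls j (gc (m - j)) \<in> B (Suc n - m)"
    using Ls_maps[of j "Suc n - (m - j)" "gc (m - j)"] assms e by simp
  ultimately show ?thesis using sub[of "Suc n - m"] subspace_diff subspace_scale by simp
qed

lemma gc_B: "m \<le> n \<Longrightarrow> gc m \<in> B (Suc n - m)"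
proof (induction m rule: less_induct)
  case (less m)
  show ?case
  proof (cases m)
    case 0 then show ?thesis using h_in gc_0 by simp
  next
    case (Suc k)
    have "(\<Sum>j=1..Suc k. SS (scale (lc j) (gc (Suc k - j)) - Ls j (gc (Suc k - j)))) \<in> B (Suc n - m)"
    proof (rule subspace_sum[OF sub], simp)
      fix j assume j: "j \<in> {1..Suc k}"
      have "scale (lc j) (gc (m - j)) - Ls j (gc (m - j)) \<in> B (Suc n - m)"
        using j Suc less by (intro summand_B less) auto
      then show "SS (scale (lc j) (gc (Suc k - j)) - Ls j (gc (Suc k - j))) \<in> B (Suc n - m)"
        using Suc less by (intro SS_B) auto
    qed
    then show ?thesis using Suc gc_Suc by simp
  qed
qed

lemma yy_B: "m \<le> n \<Longrightarrow> yy m \<in> B (Suc n - m)"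
  unfolding yy_def
  by (rule subspace_sum[OF sub], simp) (intro summand_B gc_B, auto)

lemma gc_Bi: "m \<le> n \<Longrightarrow> i \<le> Suc n - m \<Longrightarrow> gc m \<in> B i"
  using gc_B memB by (metis diff_le_self)

lemma nu_gc: "1 \<le> m \<Longrightarrow> m \<le> n \<Longrightarrow> \<nu> (gc m) = 0"
proof -
  assume m: "1 \<le> m" "m \<le> n"
  then obtain k where k: "m = Suc k" by (cases m) auto
  let ?a = "\<lambda>j. scale (lc j) (gc (Suc k - j)) - Ls j (gc (Suc k - j))"
  have aB: "?a j \<in> B (Suc n - m)" if "j \<in> {1..Suc k}" for j
    using that m k summand_B[of j "Suc k" "lc j"] gc_B[of "Suc k - j"] by auto
  have aD: "?a j \<in> D0" if "j \<in> {1..Suc k}" for j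
    using aB[OF that] m by (intro BD0[of "Suc n - m"]) auto
  have "\<nu> (gc m) = (\<Sum>j=1..Suc k. \<nu> (SS (?a j)))"
    unfolding k gc_Suc
  proof (rule nu_sum)
    fix j assume j: "j \<in> {1..Suc k}"
    have "SS (?a j) \<in> B (Suc n - m)" using aB[OF j] m by (intro SS_B) auto
    then show "SS (?a j) \<in> B 0" using memB[of _ "Suc n - m" 0] by simp
  qed
  also have "\<dots> = 0" using aD nu_SS by simp
  finally show ?thesis .
qed

lemma nu_yy: "1 \<le> m \<Longrightarrow> m \<le> n \<Longrightarrow> \<nu> (yy m) = 0"
proof -
  assume m: "1 \<le> m" "m \<le> n"
  then obtain k where k: "m = Suc k" by (cases m) auto
  have B0s: "gc (m - j) \<in> B 0" "Ls j (gc (m - j)) \<in> B 0" if "j \<in> {1..m}" for j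
    using that m gc_Bi[of "m - j" 0] Ls_maps[of j "Suc n - (m - j)" "gc (m - j)"] gc_B[of "m - j"]
      memB[of "Ls j (gc (m - j))" "Suc n - m" 0]
    by auto
  have "\<nu> (yy m) = (\<Sum>j=1..m. lc j * \<nu> (gc (m - j)) - \<nu> (Ls j (gc (m - j))))"
    unfolding yy_def
    by (subst nu_sum) (auto intro!: sum.cong simp: B0s nu_diff nu_scale subspace_scale[OF B0] subspace_diff[OF B0])
  also have "\<dots> = (\<Sum>j=1..m. lc j * \<nu> (gc (m - j))) - lc m"
    by (simp add: sum_subtractf lc_def')
  also have "(\<Sum>j=1..m. lc j * \<nu> (gc (m - j))) = (\<Sum>j=1..k. lc j * \<nu> (gc (m - j))) + lc m"
    unfolding k by (simp add: sum.cl_ivl_Suc gc_0 nu_h)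
  also have "(\<Sum>j=1..k. lc j * \<nu> (gc (m - j))) = 0"
    using m k by (intro sum.neutral) (auto simp: nu_gc)
  finally show ?thesis by simp
qed

lemma gc_Rl: "1 \<le> m \<Longrightarrow> m \<le> n \<Longrightarrow> gc m = Rl (yy m)"
proof -
  assume m: "1 \<le> m" "m \<le> n"
  then obtain k where k: "m = Suc k" by (cases m) auto
  let ?a = "\<lambda>j. scale (lc j) (gc (Suc k - j)) - Ls j (gc (Suc k - j))"
  have aB: "?a j \<in> B (Suc n - m)" if "j \<in> {1..Suc k}" for j
    using that m k summand_B[of j "Suc k" "lc j"] gc_B[of "Suc k - j"] by auto
  have aD: "?a j \<in> D0" if "j \<in> {1..Suc k}" for j
    using aB[OF that] m by (intro BD0[of "Suc n - m"]) auto
  have aB0: "?a j \<in> B 0" if "j \<in> {1..Suc k}" for j using aD[OF that] D0B0 by blast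
  have hD: "scale c h \<in> D0" for c using BD0[of "Suc n" h] h_in subspace_scale[OF D0_sub] by simp
  have "gc m = (\<Sum>j=1..Suc k. Rl (?a j - scale (\<nu> (?a j)) h))"
    unfolding k gc_Suc SS_def ..
  also have "\<dots> = Rl (\<Sum>j=1..Suc k. ?a j - scale (\<nu> (?a j)) h)"
    using aD hD by (subst Rl_sum) (auto simp: subspace_diff[OF D0_sub])
  also have "(\<Sum>j=1..Suc k. ?a j - scale (\<nu> (?a j)) h) = yy m - scale (\<nu> (yy m)) h"
  proof -
    have "(\<Sum>j=1..Suc k. ?a j - scale (\<nu> (?a j)) h) = (\<Sum>j=1..Suc k. ?a j) - scale (\<Sum>j=1..Suc k. \<nu> (?a j)) h"
      by (simp only: sum_subtractf scale_sum_left)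
    also have "(\<Sum>j=1..Suc k. \<nu> (?a j)) = \<nu> (\<Sum>j=1..Suc k. ?a j)"
      using aB0 by (simp only: nu_sum)
    also have "(\<Sum>j=1..Suc k. ?a j) = yy m" unfolding yy_def k ..
    finally show ?thesis .
  qed
  also have "\<dots> = yy m" using nu_yy m by simp
  finally show ?thesis .
qed


definition gg where "gg \<epsilon> = scale (inverse (\<nu> (heps \<epsilon>))) (heps \<epsilon>)"
definition tg where "tg k \<epsilon> = gtil scale gg gc k \<epsilon>"
definition tL where "tL j \<epsilon> x = Ltil scale Leps Ls j \<epsilon> x"

lemma gg_B: "\<epsilon> \<in> {0<..<1} \<Longrightarrow> i \<le> Suc n \<Longrightarrow> gg \<epsilon> \<in> B i"
  unfolding gg_def using heps_in memB sub subspace_scale by (metis le_refl)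

lemma nu_gg: "\<epsilon> \<in> {0<..<1} \<Longrightarrow> \<nu> (gg \<epsilon>) = 1"
  unfolding gg_def using heps_in memB[of "heps \<epsilon>" "Suc n" 0] nu_heps by (simp add: nu_scale)

lemma Leps_gg: "\<epsilon> \<in> {0<..<1} \<Longrightarrow> Leps \<epsilon> (gg \<epsilon>) = scale (lameps \<epsilon>) (gg \<epsilon>)"
proof -
  assume e: "\<epsilon> \<in> {0<..<1}"
  have "heps \<epsilon> \<in> B 0" using e heps_in memB[of "heps \<epsilon>" "Suc n" 0] by simp
  moreover have "lin_on scale (B 0) (Leps \<epsilon>)" using Leps_lin e by blast
  ultimately show ?thesis unfolding gg_def using e heps_eig
    by (simp add: lin_scale mult.commute)
qed

lemma tg0: "tg 0 \<epsilon> = gg \<epsilon> - h"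
  by (simp add: tg_def gtil_def gc_0)

lemma gg_split: "gg \<epsilon> = gc 0 + tg 0 \<epsilon>"
  by (simp add: tg0 gc_0)

lemma tg_expl: "tg k \<epsilon> = scale (1 / (of_real \<epsilon>) ^ k) (gg \<epsilon> - (\<Sum>i=0..k. scale ((of_real \<epsilon>) ^ i) (gc i)))"
  by (simp add: tg_def gtil_def)

lemma tg_Suc: "\<epsilon> \<noteq> 0 \<Longrightarrow> tg (Suc k) \<epsilon> = scale (of_real (1 / \<epsilon>)) (tg k \<epsilon>) - gc (Suc k)"
proof -
  assume e: "\<epsilon> \<noteq> 0"
  define s where "s = (of_real \<epsilon> :: 'k)"
  have s: "s \<noteq> 0" using e by (simp add: s_def)
  let ?X = "gg \<epsilon> - (\<Sum>i=0..k. scale (s ^ i) (gc i))"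
  have f1: "1 / s ^ Suc k * s ^ Suc k = 1" using s by simp
  have f2: "1 / s * (1 / s ^ k) = 1 / s ^ Suc k" by simp
  have "tg (Suc k) \<epsilon> = scale (1 / s ^ Suc k) (?X - scale (s ^ Suc k) (gc (Suc k)))"
    unfolding tg_expl s_def[symmetric] by (simp add: algebra_simps)
  also have "\<dots> = scale (1 / s) (scale (1 / s ^ k) ?X) - gc (Suc k)"
    by (simp only: scale_right_diff_distrib scale_scale f1 f2 scale_one)
  also have "scale (1 / s ^ k) ?X = tg k \<epsilon>" unfolding tg_expl s_def ..
  finally show ?thesis by (simp add: s_def)
qed

lemma tg_B: "k \<le> n \<Longrightarrow> \<epsilon> \<in> {0<..<1} \<Longrightarrow> tg k \<epsilon> \<in> B (Suc n - k)"
proof -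
  assume a: "k \<le> n" "\<epsilon> \<in> {0<..<1}"
  have s: "subspace (B (Suc n - k))" using sub by simp
  have "(\<Sum>i=0..k. scale (of_real (\<epsilon> ^ i)) (gc i)) \<in> B (Suc n - k)"
    using a by (intro subspace_sum[OF s] subspace_scale[OF s] gc_Bi) auto
  moreover have "gg \<epsilon> \<in> B (Suc n - k)" using a gg_B by simp
  ultimately show ?thesis unfolding tg_def gtil_def
    using s subspace_scale subspace_diff by blast
qed

lemma tg_Bi: "k \<le> n \<Longrightarrow> \<epsilon> \<in> {0<..<1} \<Longrightarrow> i \<le> Suc n - k \<Longrightarrow> tg k \<epsilon> \<in> B i"
  using tg_B memB by (metis diff_le_self)

lemma tL0: "tL 0 \<epsilon> x = Leps \<epsilon> x - Ls 0 x"
  by (simp add: tL_def Ltil_def)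

lemma tL_expl: "tL j \<epsilon> x = scale (1 / (of_real \<epsilon>) ^ j) (Leps \<epsilon> x - Ls 0 x - (\<Sum>i=1..j. scale ((of_real \<epsilon>) ^ i) (Ls i x)))"
  by (simp add: tL_def Ltil_def)

lemma tL_Suc: "\<epsilon> \<noteq> 0 \<Longrightarrow> tL m \<epsilon> x = scale (of_real \<epsilon>) (Ls (Suc m) x + tL (Suc m) \<epsilon> x)"
proof -
  assume e: "\<epsilon> \<noteq> 0"
  define s where "s = (of_real \<epsilon> :: 'k)"
  have s: "s \<noteq> 0" using e by (simp add: s_def)
  let ?X = "Leps \<epsilon> x - Ls 0 x - (\<Sum>i=1..m. scale (s ^ i) (Ls i x))"
  have f1: "s * (1 / s ^ Suc m * s ^ Suc m) = s" using s by simp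
  have f2: "s * (1 / s ^ Suc m) = 1 / s ^ m" using s by simp
  have "tL (Suc m) \<epsilon> x = scale (1 / s ^ Suc m) (?X - scale (s ^ Suc m) (Ls (Suc m) x))"
    unfolding tL_expl s_def[symmetric] by (simp add: algebra_simps)
  then have "scale s (Ls (Suc m) x + tL (Suc m) \<epsilon> x)
     = scale s (Ls (Suc m) x) + scale (s * (1 / s ^ Suc m)) ?X - scale (s * (1 / s ^ Suc m * s ^ Suc m)) (Ls (Suc m) x)"
    by (simp only: scale_right_diff_distrib scale_right_distrib scale_scale add_diff_eq)
  also have "\<dots> = scale (1 / s ^ m) ?X" by (simp only: f1 f2) simp
  also have "\<dots> = tL m \<epsilon> x" unfolding tL_expl s_def ..
  finally show ?thesis by (simp add: s_def)
qed

lemma tL_B: "j \<le> n \<Longrightarrow> j \<le> i \<Longrightarrow> i \<le> Suc n \<Longrightarrow> \<epsilon> \<in> {0<..<1} \<Longrightarrow> x \<in> B i \<Longrightarrow> tL j \<epsilon> x \<in> B (i - j)"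
  using Ltil_bdd unfolding tL_def maps_into_def by blast


definition cc where "cc k \<epsilon> = (\<Sum>j=1..k. \<nu> (Ls j (tg (k - j) \<epsilon>))) + \<nu> (tL k \<epsilon> (gg \<epsilon>))"
definition Phi where "Phi k \<epsilon> = scale (cc k \<epsilon>) (gg \<epsilon>) + (\<Sum>j=1..k. scale (lc j) (tg (k - j) \<epsilon>))
   - (\<Sum>j=1..k. Ls j (tg (k - j) \<epsilon>)) - tL k \<epsilon> (gg \<epsilon>)"

lemma tg_down: "\<epsilon> \<noteq> 0 \<Longrightarrow> tg k \<epsilon> = scale (of_real \<epsilon>) (gc (Suc k) + tg (Suc k) \<epsilon>)"
  by (simp add: tg_Suc scale_right_distrib)

lemma Ls_tg_B: "k \<le> n \<Longrightarrow> \<epsilon> \<in> {0<..<1} \<Longrightarrow> 1 \<le> j \<Longrightarrow> j \<le> k \<Longrightarrow> Ls j (tg (k - j) \<epsilon>) \<in> B (Suc n - k)"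
  using Ls_maps[of j "Suc n - (k - j)" "tg (k - j) \<epsilon>"] tg_B[of "k - j" \<epsilon>] by auto

lemma Phi_B: "k \<le> n \<Longrightarrow> \<epsilon> \<in> {0<..<1} \<Longrightarrow> Phi k \<epsilon> \<in> B (Suc n - k)"
proof -
  assume a: "k \<le> n" "\<epsilon> \<in> {0<..<1}"
  have s: "subspace (B (Suc n - k))" using sub by simp
  have 1: "scale (cc k \<epsilon>) (gg \<epsilon>) \<in> B (Suc n - k)" using a gg_B subspace_scale[OF s] by simp
  have 2: "(\<Sum>j=1..k. scale (lc j) (tg (k - j) \<epsilon>)) \<in> B (Suc n - k)"
    using a by (intro subspace_sum[OF s] subspace_scale[OF s] tg_Bi) auto
  have 3: "(\<Sum>j=1..k. Ls j (tg (k - j) \<epsilon>)) \<in> B (Suc n - k)"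
    using a by (intro subspace_sum[OF s] Ls_tg_B) auto
  have 4: "tL k \<epsilon> (gg \<epsilon>) \<in> B (Suc n - k)" using a tL_B[of k "Suc n"] gg_B by auto
  show ?thesis unfolding Phi_def
    by (intro subspace_diff[OF s] subspace_add[OF s] 1 2 3 4)
qed

lemma Phi_Bi: "k \<le> n \<Longrightarrow> \<epsilon> \<in> {0<..<1} \<Longrightarrow> i \<le> Suc n - k \<Longrightarrow> Phi k \<epsilon> \<in> B i"
  using Phi_B memB by (metis diff_le_self)

lemma ring_aux: "(x::'k) = s * Sa + s * Sb + s * (al + be + ga) \<Longrightarrow> y = Sb + be + ga \<Longrightarrow> z = Sa + al \<Longrightarrow> x = s * (y + z)"
  by (simp add: algebra_simps)

lemma vec_aux: "scale (s * (c' + l')) (A' + T') + scale s a + scale s t - (scale s la + scale s lt) - scale s (LA' + LT' + tL')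
  = scale s (scale c' (A' + T') + t + scale l' T' - (lt + LT') - tL' + ((a - la) + (scale l' A' - LA')))"
  by (simp add: algebra_simps)

lemma key:
  assumes m: "Suc m \<le> n" and e: "\<epsilon> \<in> {0<..<1}"
  shows "Phi m \<epsilon> = scale (of_real \<epsilon>) (Phi (Suc m) \<epsilon> + yy (Suc m))"
proof -
  define s where "s = (of_real \<epsilon> :: 'k)"
  have e0: "\<epsilon> \<noteq> 0" using e by simp
  define A where "A j = gc (Suc m - j)" for j
  define T where "T j = tg (Suc m - j) \<epsilon>" for j
  have AB: "A j \<in> B (n - m + j)" "T j \<in> B (n - m + j)" if "j \<le> Suc m" for j
    unfolding A_def T_def using that m gc_B[of "Suc m - j"] tg_B[of "Suc m - j" \<epsilon>] e
    by (auto simp: Suc_diff_le)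
  have lin: "lin_on scale (B (n - m + j)) (Ls j)" if "1 \<le> j" "j \<le> Suc m" for j
    using that m by (intro Ls_lin) auto
  have LB: "Ls j (A j) \<in> B 0" "Ls j (T j) \<in> B 0" if "1 \<le> j" "j \<le> Suc m" for j
    using that m AB[OF that(2)] Ls_maps[of j "n - m + j"] memB[of _ "n - m" 0] by auto
  have tgm: "tg (m - j) \<epsilon> = scale s (A j + T j)" if "j \<in> {1..m}" for j
    using that tg_down[OF e0, of "m - j"] unfolding A_def T_def s_def by (simp add: Suc_diff_le)
  have T1: "Ls j (tg (m - j) \<epsilon>) = scale s (Ls j (A j) + Ls j (T j))" if "j \<in> {1..m}" for j
  proof -
    have j: "1 \<le> j" "j \<le> Suc m" using that by auto
    have l: "lin_on scale (B (n - m + j)) (Ls j)" using lin[OF j] .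
    have ab: "A j \<in> B (n - m + j)" "T j \<in> B (n - m + j)" using AB j by auto
    have ss: "subspace (B (n - m + j))" using sub m j by simp
    have "A j + T j \<in> B (n - m + j)" using ab ss subspace_add by blast
    then show ?thesis unfolding tgm[OF that] using lin_scale[OF l] lin_add[OF l ab] by simp
  qed
  have nT1: "\<nu> (Ls j (tg (m - j) \<epsilon>)) = s * (\<nu> (Ls j (A j)) + \<nu> (Ls j (T j)))" if "j \<in> {1..m}" for j
    using that T1[OF that] LB[of j] by (simp add: nu_scale nu_add subspace_add[OF B0])
  have g0: "gg \<epsilon> = A (Suc m) + T (Suc m)" unfolding A_def T_def using gg_split by simp
  have LgB: "Ls (Suc m) (A (Suc m)) \<in> B 0" "Ls (Suc m) (T (Suc m)) \<in> B 0"
    using LB[of "Suc m"] by auto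
  have tLgB: "tL (Suc m) \<epsilon> (gg \<epsilon>) \<in> B 0"
    using tL_B[of "Suc m" "Suc n" \<epsilon> "gg \<epsilon>"] m e gg_B memB[of _ "Suc n - Suc m" 0] by auto
  have T3: "tL m \<epsilon> (gg \<epsilon>) = scale s (Ls (Suc m) (A (Suc m)) + Ls (Suc m) (T (Suc m)) + tL (Suc m) \<epsilon> (gg \<epsilon>))"
    using tL_Suc[OF e0, of m "gg \<epsilon>"] lin[of "Suc m"] AB[of "Suc m"] g0 unfolding s_def
    by (simp add: lin_add)
  have nT3: "\<nu> (tL m \<epsilon> (gg \<epsilon>)) = s * (\<nu> (Ls (Suc m) (A (Suc m))) + \<nu> (Ls (Suc m) (T (Suc m))) + \<nu> (tL (Suc m) \<epsilon> (gg \<epsilon>)))"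
    unfolding T3 using LgB tLgB by (simp add: nu_scale nu_add subspace_add[OF B0])
  have ccm: "cc m \<epsilon> = s * (cc (Suc m) \<epsilon> + lc (Suc m))"
  proof -
    have "cc m \<epsilon> = (\<Sum>j=1..m. s * (\<nu> (Ls j (A j)) + \<nu> (Ls j (T j)))) + \<nu> (tL m \<epsilon> (gg \<epsilon>))"
      unfolding cc_def using nT1 by simp
    moreover have "cc (Suc m) \<epsilon> = (\<Sum>j=1..m. \<nu> (Ls j (T j))) + \<nu> (Ls (Suc m) (T (Suc m))) + \<nu> (tL (Suc m) \<epsilon> (gg \<epsilon>))"
      unfolding cc_def T_def by (simp add: sum.cl_ivl_Suc)
    moreover have "lc (Suc m) = (\<Sum>j=1..m. \<nu> (Ls j (A j))) + \<nu> (Ls (Suc m) (A (Suc m)))"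
      unfolding lc_def' A_def by (simp add: sum.cl_ivl_Suc)
    moreover have "(\<Sum>j=1..m. s * (\<nu> (Ls j (A j)) + \<nu> (Ls j (T j))))
       = s * (\<Sum>j=1..m. \<nu> (Ls j (A j))) + s * (\<Sum>j=1..m. \<nu> (Ls j (T j)))"
      by (simp add: sum.distrib sum_distrib_left distrib_left)
    ultimately show ?thesis using nT3 by (intro ring_aux) simp_all
  qed
  have sum1: "(\<Sum>j=1..m. scale (lc j) (tg (m - j) \<epsilon>)) = (\<Sum>j=1..m. scale (s * lc j) (A j) + scale (s * lc j) (T j))"
    using tgm by (intro sum.cong refl) (simp add: scale_right_distrib mult.commute)
  have sum2: "(\<Sum>j=1..m. Ls j (tg (m - j) \<epsilon>)) = (\<Sum>j=1..m. scale s (Ls j (A j)) + scale s (Ls j (T j)))"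
    using T1 by (intro sum.cong refl) (simp add: scale_right_distrib)
  have P1: "Phi (Suc m) \<epsilon> = scale (cc (Suc m) \<epsilon>) (gg \<epsilon>) + (\<Sum>j=1..m. scale (lc j) (T j)) + scale (lc (Suc m)) (T (Suc m))
     - ((\<Sum>j=1..m. Ls j (T j)) + Ls (Suc m) (T (Suc m))) - tL (Suc m) \<epsilon> (gg \<epsilon>)"
    unfolding Phi_def T_def by (simp add: sum.cl_ivl_Suc)
  have Y1: "yy (Suc m) = (\<Sum>j=1..m. scale (lc j) (A j) - Ls j (A j)) + (scale (lc (Suc m)) (A (Suc m)) - Ls (Suc m) (A (Suc m)))"
    unfolding yy_def A_def by (simp add: sum.cl_ivl_Suc)
  have sum1': "(\<Sum>j=1..m. scale (s * lc j) (A j) + scale (s * lc j) (T j))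
     = scale s (\<Sum>j=1..m. scale (lc j) (A j)) + scale s (\<Sum>j=1..m. scale (lc j) (T j))"
    by (simp add: sum.distrib scale_sum_right)
  have sum2': "(\<Sum>j=1..m. scale s (Ls j (A j)) + scale s (Ls j (T j)))
     = scale s (\<Sum>j=1..m. Ls j (A j)) + scale s (\<Sum>j=1..m. Ls j (T j))"
    by (simp add: sum.distrib scale_sum_right)
  have Y2: "(\<Sum>j=1..m. scale (lc j) (A j) - Ls j (A j)) = (\<Sum>j=1..m. scale (lc j) (A j)) - (\<Sum>j=1..m. Ls j (A j))"
    by (simp add: sum_subtractf)
  have "Phi m \<epsilon> = scale (s * (cc (Suc m) \<epsilon> + lc (Suc m))) (A (Suc m) + T (Suc m))
     + scale s (\<Sum>j=1..m. scale (lc j) (A j)) + scale s (\<Sum>j=1..m. scale (lc j) (T j))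
     - (scale s (\<Sum>j=1..m. Ls j (A j)) + scale s (\<Sum>j=1..m. Ls j (T j)))
     - scale s (Ls (Suc m) (A (Suc m)) + Ls (Suc m) (T (Suc m)) + tL (Suc m) \<epsilon> (gg \<epsilon>))"
    unfolding Phi_def[of m] sum1 sum2 sum1' sum2' T3 ccm by (simp only: g0[symmetric] add.assoc)
  also have "\<dots> = scale s (Phi (Suc m) \<epsilon> + yy (Suc m))"
    unfolding P1 Y1 Y2 g0[symmetric] using vec_aux[of s "cc (Suc m) \<epsilon>" "lc (Suc m)" "A (Suc m)" "T (Suc m)"
      "\<Sum>j=1..m. scale (lc j) (A j)" "\<Sum>j=1..m. scale (lc j) (T j)" "\<Sum>j=1..m. Ls j (A j)"
      "\<Sum>j=1..m. Ls j (T j)" "Ls (Suc m) (A (Suc m))" "Ls (Suc m) (T (Suc m))" "tL (Suc m) \<epsilon> (gg \<epsilon>)"]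
    by (simp only: g0[symmetric])
  finally show ?thesis unfolding s_def .
qed


lemma Phi_D0: "k \<le> n \<Longrightarrow> \<epsilon> \<in> {0<..<1} \<Longrightarrow> Phi k \<epsilon> \<in> D0"
  using Phi_B[of k \<epsilon>] BD0[of "Suc n - k"] by auto

lemma tg_Rl: "k \<le> n \<Longrightarrow> \<epsilon> \<in> {0<..<1} \<Longrightarrow> tg k \<epsilon> = Rl (Phi k \<epsilon>)"
proof (induction k)
  case 0
  note e = 0(2)
  have gB: "gg \<epsilon> \<in> B 0" using gg_B e by simp
  have hB: "h \<in> B 0" using h_B by simp
  have nL: "\<nu> (Ls 0 (gg \<epsilon>)) = lam" using nu_eig gB nu_gg e by simp
  have LgB: "Ls 0 (gg \<epsilon>) \<in> B 0" using gB L0_B by simp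
  have lgB: "scale (lameps \<epsilon>) (gg \<epsilon>) \<in> B 0" using gB subspace_scale[OF B0] by simp
  have nt: "\<nu> (scale (lameps \<epsilon>) (gg \<epsilon>) - Ls 0 (gg \<epsilon>)) = lameps \<epsilon> - lam"
    using nu_diff[OF lgB LgB] nL nu_scale[OF gB] nu_gg[OF e] by simp
  have "TT (gg \<epsilon> - h) = Ls 0 (gg \<epsilon>) - scale lam (gg \<epsilon>)"
    unfolding TT_def using lin_diff[OF L_lin B0 gB hB] h_eig nu_diff[OF gB hB] nu_gg[OF e] nu_h
    by (simp add: algebra_simps)
  also have "\<dots> = Phi 0 \<epsilon>"
    unfolding Phi_def cc_def tL0 Leps_gg[OF e] nt by (simp add: algebra_simps)
  finally have "gg \<epsilon> - h = Rl (Phi 0 \<epsilon>)"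
    using Phi_D0[of 0 \<epsilon>] e gB hB subspace_diff[OF B0] by (intro Rl_eq) auto
  then show ?case by (simp add: tg0)
next
  case (Suc m)
  note e = Suc(3)
  have e0: "\<epsilon> \<noteq> 0" using e by simp
  have IH: "tg m \<epsilon> = Rl (Phi m \<epsilon>)" using Suc by simp
  have D1: "Phi m \<epsilon> \<in> D0" using Phi_D0 Suc by simp
  have D2: "yy (Suc m) \<in> D0" using yy_B[of "Suc m"] Suc BD0[of "Suc n - Suc m"] by auto
  have D3: "scale (of_real (1 / \<epsilon>)) (Phi m \<epsilon>) \<in> D0" using D1 subspace_scale[OF D0_sub] by blast
  have "tg (Suc m) \<epsilon> = scale (of_real (1 / \<epsilon>)) (Rl (Phi m \<epsilon>)) - Rl (yy (Suc m))"
    using tg_Suc[OF e0] IH gc_Rl[of "Suc m"] Suc by simp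
  also have "\<dots> = Rl (scale (of_real (1 / \<epsilon>)) (Phi m \<epsilon>) - yy (Suc m))"
    using Rl_diff[OF D3 D2] Rl_scale[OF D1] by simp
  also have "scale (of_real (1 / \<epsilon>)) (Phi m \<epsilon>) = Phi (Suc m) \<epsilon> + yy (Suc m)"
    using key[of m \<epsilon>] Suc e0 by (simp add: of_real_mult[symmetric] del: of_real_mult)
  finally show ?case by simp
qed


definition ZZ where "ZZ i (f :: real \<Rightarrow> 'v) \<longleftrightarrow> (\<forall>\<epsilon>\<in>{0<..<1}. f \<epsilon> \<in> B i) \<and> ((\<lambda>\<epsilon>. N i (f \<epsilon>)) \<longlongrightarrow> 0) (at_right 0)"
definition BB where "BB i (f :: real \<Rightarrow> 'v) \<longleftrightarrow> (\<forall>\<epsilon>\<in>{0<..<1}. f \<epsilon> \<in> B i) \<and> (\<exists>C. \<forall>\<epsilon>\<in>{0<..<1}. N i (f \<epsilon>) \<le> C)"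
definition Zs where "Zs (c :: real \<Rightarrow> 'k) \<longleftrightarrow> ((\<lambda>\<epsilon>. norm (c \<epsilon>)) \<longlongrightarrow> 0) (at_right (0::real))"
definition Bs where "Bs (c :: real \<Rightarrow> 'k) \<longleftrightarrow> (\<exists>C. \<forall>\<epsilon>\<in>{0<..<1::real}. norm (c \<epsilon>) \<le> C)"

lemma ev01: "eventually (\<lambda>\<epsilon>. \<epsilon> \<in> {0<..<1::real}) (at_right 0)"
  using eventually_at_right_real[of 0 1] by simp

lemma ZZ_sandwich:
  fixes f :: "real \<Rightarrow> 'v"
  assumes i: "i \<le> Suc n" and M: "\<forall>\<epsilon>\<in>{0<..<1}. f \<epsilon> \<in> B i"
    and le: "eventually (\<lambda>\<epsilon>. N i (f \<epsilon>) \<le> v \<epsilon>) (at_right 0)" and v: "(v \<longlongrightarrow> 0) (at_right 0)"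
  shows "ZZ i f"
proof -
  have ev: "eventually (\<lambda>\<epsilon>. 0 \<le> N i (f \<epsilon>)) (at_right 0)"
  proof (rule eventually_mono[OF ev01])
    fix \<epsilon> :: real assume "\<epsilon> \<in> {0<..<1}"
    then have "f \<epsilon> \<in> B i" using M by blast
    then show "0 \<le> N i (f \<epsilon>)" using N_nn[OF i] by blast
  qed
  have z: "((\<lambda>_. 0::real) \<longlongrightarrow> 0) (at_right 0)" by (rule tendsto_const)
  have "((\<lambda>\<epsilon>. N i (f \<epsilon>)) \<longlongrightarrow> 0) (at_right 0)"
    by (rule tendsto_sandwich[OF ev le z v])
  then show ?thesis using M unfolding ZZ_def by blast
qed

lemma BBnn: "i \<le> Suc n \<Longrightarrow> BB i f \<Longrightarrow> \<exists>C\<ge>0. \<forall>\<epsilon>\<in>{0<..<1}. N i (f \<epsilon>) \<le> C"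
proof -
  assume "i \<le> Suc n" "BB i f"
  then obtain C where C: "\<forall>\<epsilon>\<in>{0<..<1}. N i (f \<epsilon>) \<le> C" unfolding BB_def by blast
  have "\<forall>\<epsilon>\<in>{0<..<1}. N i (f \<epsilon>) \<le> max C 0" using C by (auto intro: le_max_iff_disj[THEN iffD2])
  then show ?thesis by (intro exI[of _ "max C 0"]) auto
qed

lemma ZZ_add: "i \<le> Suc n \<Longrightarrow> ZZ i f \<Longrightarrow> ZZ i g \<Longrightarrow> ZZ i (\<lambda>\<epsilon>. f \<epsilon> + g \<epsilon>)"
proof -
  assume i: "i \<le> Suc n" and f: "ZZ i f" and g: "ZZ i g"
  have M: "\<forall>\<epsilon>\<in>{0<..<1}. f \<epsilon> \<in> B i" "\<forall>\<epsilon>\<in>{0<..<1}. g \<epsilon> \<in> B i" using f g by (auto simp: ZZ_def)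
  have T: "((\<lambda>\<epsilon>. N i (f \<epsilon>)) \<longlongrightarrow> 0) (at_right 0)" "((\<lambda>\<epsilon>. N i (g \<epsilon>)) \<longlongrightarrow> 0) (at_right 0)"
    using f g by (auto simp: ZZ_def)
  show ?thesis
  proof (rule ZZ_sandwich[where v="\<lambda>\<epsilon>. N i (f \<epsilon>) + N i (g \<epsilon>)", OF i])
    show "\<forall>\<epsilon>\<in>{0<..<1}. f \<epsilon> + g \<epsilon> \<in> B i" using M subspace_add[OF sub[OF i]] by blast
    show "eventually (\<lambda>\<epsilon>. N i (f \<epsilon> + g \<epsilon>) \<le> N i (f \<epsilon>) + N i (g \<epsilon>)) (at_right 0)"
    proof (rule eventually_mono[OF ev01])
      fix \<epsilon> :: real assume "\<epsilon> \<in> {0<..<1}"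
      then show "N i (f \<epsilon> + g \<epsilon>) \<le> N i (f \<epsilon>) + N i (g \<epsilon>)" using N_tri[OF i] M by blast
    qed
    show "((\<lambda>\<epsilon>. N i (f \<epsilon>) + N i (g \<epsilon>)) \<longlongrightarrow> 0) (at_right 0)"
      using tendsto_add[OF T] by simp
  qed
qed

lemma ZZ_diff: "i \<le> Suc n \<Longrightarrow> ZZ i f \<Longrightarrow> ZZ i g \<Longrightarrow> ZZ i (\<lambda>\<epsilon>. f \<epsilon> - g \<epsilon>)"
proof -
  assume i: "i \<le> Suc n" and f: "ZZ i f" and g: "ZZ i g"
  have M: "\<forall>\<epsilon>\<in>{0<..<1}. f \<epsilon> \<in> B i" "\<forall>\<epsilon>\<in>{0<..<1}. g \<epsilon> \<in> B i" using f g by (auto simp: ZZ_def)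
  have T: "((\<lambda>\<epsilon>. N i (f \<epsilon>)) \<longlongrightarrow> 0) (at_right 0)" "((\<lambda>\<epsilon>. N i (g \<epsilon>)) \<longlongrightarrow> 0) (at_right 0)"
    using f g by (auto simp: ZZ_def)
  show ?thesis
  proof (rule ZZ_sandwich[where v="\<lambda>\<epsilon>. N i (f \<epsilon>) + N i (g \<epsilon>)", OF i])
    show "\<forall>\<epsilon>\<in>{0<..<1}. f \<epsilon> - g \<epsilon> \<in> B i" using M subspace_diff[OF sub[OF i]] by blast
    show "eventually (\<lambda>\<epsilon>. N i (f \<epsilon> - g \<epsilon>) \<le> N i (f \<epsilon>) + N i (g \<epsilon>)) (at_right 0)"
    proof (rule eventually_mono[OF ev01])
      fix \<epsilon> :: real assume "\<epsilon> \<in> {0<..<1}"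
      then show "N i (f \<epsilon> - g \<epsilon>) \<le> N i (f \<epsilon>) + N i (g \<epsilon>)" using N_diff[OF i] M by blast
    qed
    show "((\<lambda>\<epsilon>. N i (f \<epsilon>) + N i (g \<epsilon>)) \<longlongrightarrow> 0) (at_right 0)"
      using tendsto_add[OF T] by simp
  qed
qed

lemma BB_add: "i \<le> Suc n \<Longrightarrow> BB i f \<Longrightarrow> BB i g \<Longrightarrow> BB i (\<lambda>\<epsilon>. f \<epsilon> + g \<epsilon>)"
proof -
  assume i: "i \<le> Suc n" and f: "BB i f" and g: "BB i g"
  obtain C C' where C: "\<forall>\<epsilon>\<in>{0<..<1}. N i (f \<epsilon>) \<le> C" "\<forall>\<epsilon>\<in>{0<..<1}. N i (g \<epsilon>) \<le> C'"
    using f g by (auto simp: BB_def)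
  have M: "\<forall>\<epsilon>\<in>{0<..<1}. f \<epsilon> \<in> B i" "\<forall>\<epsilon>\<in>{0<..<1}. g \<epsilon> \<in> B i" using f g by (auto simp: BB_def)
  have "N i (f \<epsilon> + g \<epsilon>) \<le> C + C'" if e: "\<epsilon> \<in> {0<..<1}" for \<epsilon>
  proof -
    have "N i (f \<epsilon> + g \<epsilon>) \<le> N i (f \<epsilon>) + N i (g \<epsilon>)" using N_tri[OF i] M e by blast
    also have "\<dots> \<le> C + C'" using C e by (intro add_mono) auto
    finally show ?thesis .
  qed
  moreover have "\<forall>\<epsilon>\<in>{0<..<1}. f \<epsilon> + g \<epsilon> \<in> B i" using M subspace_add[OF sub[OF i]] by blast
  ultimately show ?thesis unfolding BB_def by blast
qed

lemma BB_diff: "i \<le> Suc n \<Longrightarrow> BB i f \<Longrightarrow> BB i g \<Longrightarrow> BB i (\<lambda>\<epsilon>. f \<epsilon> - g \<epsilon>)"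
proof -
  assume i: "i \<le> Suc n" and f: "BB i f" and g: "BB i g"
  obtain C C' where C: "\<forall>\<epsilon>\<in>{0<..<1}. N i (f \<epsilon>) \<le> C" "\<forall>\<epsilon>\<in>{0<..<1}. N i (g \<epsilon>) \<le> C'"
    using f g by (auto simp: BB_def)
  have M: "\<forall>\<epsilon>\<in>{0<..<1}. f \<epsilon> \<in> B i" "\<forall>\<epsilon>\<in>{0<..<1}. g \<epsilon> \<in> B i" using f g by (auto simp: BB_def)
  have "N i (f \<epsilon> - g \<epsilon>) \<le> C + C'" if e: "\<epsilon> \<in> {0<..<1}" for \<epsilon>
  proof -
    have "N i (f \<epsilon> - g \<epsilon>) \<le> N i (f \<epsilon>) + N i (g \<epsilon>)" using N_diff[OF i] M e by blast
    also have "\<dots> \<le> C + C'" using C e by (intro add_mono) auto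
    finally show ?thesis .
  qed
  moreover have "\<forall>\<epsilon>\<in>{0<..<1}. f \<epsilon> - g \<epsilon> \<in> B i" using M subspace_diff[OF sub[OF i]] by blast
  ultimately show ?thesis unfolding BB_def by blast
qed

lemma ZZ_zero: "i \<le> Suc n \<Longrightarrow> ZZ i (\<lambda>\<epsilon>. 0)"
  unfolding ZZ_def using sub subspace_0 N_sc[of i 0 0] by simp

lemma BB_zero: "i \<le> Suc n \<Longrightarrow> BB i (\<lambda>\<epsilon>. 0)"
  unfolding BB_def using sub subspace_0 N_sc[of i 0 0] by auto

lemma ZZ_sum: "i \<le> Suc n \<Longrightarrow> (\<And>j. j \<in> I \<Longrightarrow> ZZ i (f j)) \<Longrightarrow> ZZ i (\<lambda>\<epsilon>. \<Sum>j\<in>I. f j \<epsilon>)"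
proof (induction I rule: infinite_finite_induct)
  case (infinite A) then show ?case using ZZ_zero by simp
next
  case empty then show ?case using ZZ_zero by simp
next
  case (insert x F)
  then show ?case using ZZ_add[of i "f x" "\<lambda>\<epsilon>. \<Sum>j\<in>F. f j \<epsilon>"] by simp
qed

lemma BB_sum: "i \<le> Suc n \<Longrightarrow> (\<And>j. j \<in> I \<Longrightarrow> BB i (f j)) \<Longrightarrow> BB i (\<lambda>\<epsilon>. \<Sum>j\<in>I. f j \<epsilon>)"
proof (induction I rule: infinite_finite_induct)
  case (infinite A) then show ?case using BB_zero by simp
next
  case empty then show ?case using BB_zero by simp
next
  case (insert x F)
  then show ?case using BB_add[of i "f x" "\<lambda>\<epsilon>. \<Sum>j\<in>F. f j \<epsilon>"] by simp
qed

lemma ZZ_scale1: "i \<le> Suc n \<Longrightarrow> BB i f \<Longrightarrow> Zs c \<Longrightarrow> ZZ i (\<lambda>\<epsilon>. scale (c \<epsilon>) (f \<epsilon>))"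
proof -
  assume i: "i \<le> Suc n" and f: "BB i f" and c: "Zs c"
  obtain C where C: "C \<ge> 0" "\<forall>\<epsilon>\<in>{0<..<1}. N i (f \<epsilon>) \<le> C" using BBnn[OF i f] by blast
  have M: "\<forall>\<epsilon>\<in>{0<..<1}. f \<epsilon> \<in> B i" using f by (simp add: BB_def)
  show ?thesis
  proof (rule ZZ_sandwich[where v="\<lambda>\<epsilon>. norm (c \<epsilon>) * C"])
    show "\<forall>\<epsilon>\<in>{0<..<1}. scale (c \<epsilon>) (f \<epsilon>) \<in> B i" using M i sub subspace_scale by blast
    show "eventually (\<lambda>\<epsilon>. N i (scale (c \<epsilon>) (f \<epsilon>)) \<le> norm (c \<epsilon>) * C) (at_right 0)"
      by (rule eventually_mono[OF ev01]) (use M C i in \<open>auto simp: N_sc intro: mult_left_mono\<close>)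
    show "((\<lambda>\<epsilon>. norm (c \<epsilon>) * C) \<longlongrightarrow> 0) (at_right 0)"
      using c unfolding Zs_def by (auto intro: tendsto_mult_left_zero)
  qed (rule i)
qed

lemma ZZ_scale2: "i \<le> Suc n \<Longrightarrow> ZZ i f \<Longrightarrow> Bs c \<Longrightarrow> ZZ i (\<lambda>\<epsilon>. scale (c \<epsilon>) (f \<epsilon>))"
proof -
  assume i: "i \<le> Suc n" and f: "ZZ i f" and c: "Bs c"
  obtain C where C: "\<forall>\<epsilon>\<in>{0<..<1}. norm (c \<epsilon>) \<le> C" using c by (auto simp: Bs_def)
  have M: "\<forall>\<epsilon>\<in>{0<..<1}. f \<epsilon> \<in> B i" using f by (simp add: ZZ_def)
  show ?thesis
  proof (rule ZZ_sandwich[where v="\<lambda>\<epsilon>. C * N i (f \<epsilon>)"])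
    show "\<forall>\<epsilon>\<in>{0<..<1}. scale (c \<epsilon>) (f \<epsilon>) \<in> B i" using M i sub subspace_scale by blast
    show "eventually (\<lambda>\<epsilon>. N i (scale (c \<epsilon>) (f \<epsilon>)) \<le> C * N i (f \<epsilon>)) (at_right 0)"
    proof (rule eventually_mono[OF ev01])
      fix \<epsilon> :: real assume e: "\<epsilon> \<in> {0<..<1}"
      have "0 \<le> N i (f \<epsilon>)" using N_nn[OF i] M e by blast
      then show "N i (scale (c \<epsilon>) (f \<epsilon>)) \<le> C * N i (f \<epsilon>)"
        using M C i e by (auto simp: N_sc intro: mult_right_mono)
    qed
    show "((\<lambda>\<epsilon>. C * N i (f \<epsilon>)) \<longlongrightarrow> 0) (at_right 0)"
      using f unfolding ZZ_def by (auto intro: tendsto_mult_right_zero)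
  qed (rule i)
qed

lemma BB_scale: "i \<le> Suc n \<Longrightarrow> BB i f \<Longrightarrow> Bs c \<Longrightarrow> BB i (\<lambda>\<epsilon>. scale (c \<epsilon>) (f \<epsilon>))"
proof -
  assume i: "i \<le> Suc n" and f: "BB i f" and c: "Bs c"
  obtain C where C: "C \<ge> 0" "\<forall>\<epsilon>\<in>{0<..<1}. N i (f \<epsilon>) \<le> C" using BBnn[OF i f] by blast
  obtain D where D: "\<forall>\<epsilon>\<in>{0<..<1}. norm (c \<epsilon>) \<le> D" using c by (auto simp: Bs_def)
  have M: "\<forall>\<epsilon>\<in>{0<..<1}. f \<epsilon> \<in> B i" using f by (simp add: BB_def)
  have "N i (scale (c \<epsilon>) (f \<epsilon>)) \<le> D * C" if e: "\<epsilon> \<in> {0<..<1}" for \<epsilon>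
  proof -
    have "0 \<le> N i (f \<epsilon>)" using N_nn[OF i] M e by blast
    moreover have "norm (c \<epsilon>) \<le> D" "N i (f \<epsilon>) \<le> C" using C D e by auto
    moreover have "0 \<le> D" using norm_ge_zero[of "c \<epsilon>"] \<open>norm (c \<epsilon>) \<le> D\<close> by linarith
    ultimately have "norm (c \<epsilon>) * N i (f \<epsilon>) \<le> D * C" by (intro mult_mono) auto
    then show ?thesis using N_sc[OF i] M e by simp
  qed
  then show ?thesis using M i sub subspace_scale unfolding BB_def by blast
qed

lemma Bs_const: "Bs (\<lambda>\<epsilon>. a)" unfolding Bs_def by auto

lemma ZZ_op:
  assumes a: "a \<le> Suc n" and b: "b \<le> Suc n"
    and A: "\<exists>C. \<forall>\<epsilon>\<in>{0<..<1}. \<forall>x\<in>B a. A \<epsilon> x \<in> B b \<and> N b (A \<epsilon> x) \<le> C * N a x"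
    and f: "ZZ a f"
  shows "ZZ b (\<lambda>\<epsilon>. A \<epsilon> (f \<epsilon>))"
proof -
  obtain C where C: "\<forall>\<epsilon>\<in>{0<..<1}. \<forall>x\<in>B a. A \<epsilon> x \<in> B b \<and> N b (A \<epsilon> x) \<le> C * N a x" using A by blast
  have M: "\<forall>\<epsilon>\<in>{0<..<1}. f \<epsilon> \<in> B a" using f by (simp add: ZZ_def)
  show ?thesis
  proof (rule ZZ_sandwich[where v="\<lambda>\<epsilon>. C * N a (f \<epsilon>)"])
    show "\<forall>\<epsilon>\<in>{0<..<1}. A \<epsilon> (f \<epsilon>) \<in> B b" using M C by blast
    show "eventually (\<lambda>\<epsilon>. N b (A \<epsilon> (f \<epsilon>)) \<le> C * N a (f \<epsilon>)) (at_right 0)"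
      by (rule eventually_mono[OF ev01]) (use M C in auto)
    show "((\<lambda>\<epsilon>. C * N a (f \<epsilon>)) \<longlongrightarrow> 0) (at_right 0)"
      using f unfolding ZZ_def by (auto intro: tendsto_mult_right_zero)
  qed (rule b)
qed

lemma BB_op:
  assumes a: "a \<le> Suc n" and b: "b \<le> Suc n"
    and A: "\<exists>C. \<forall>\<epsilon>\<in>{0<..<1}. \<forall>x\<in>B a. A \<epsilon> x \<in> B b \<and> N b (A \<epsilon> x) \<le> C * N a x"
    and f: "BB a f"
  shows "BB b (\<lambda>\<epsilon>. A \<epsilon> (f \<epsilon>))"
proof -
  obtain C where C: "\<forall>\<epsilon>\<in>{0<..<1}. \<forall>x\<in>B a. A \<epsilon> x \<in> B b \<and> N b (A \<epsilon> x) \<le> C * N a x" using A by blast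
  obtain D where D: "D \<ge> 0" "\<forall>\<epsilon>\<in>{0<..<1}. N a (f \<epsilon>) \<le> D" using BBnn[OF a f] by blast
  have M: "\<forall>\<epsilon>\<in>{0<..<1}. f \<epsilon> \<in> B a" using f by (simp add: BB_def)
  have "N b (A \<epsilon> (f \<epsilon>)) \<le> \<bar>C\<bar> * D" if e: "\<epsilon> \<in> {0<..<1}" for \<epsilon>
  proof -
    have "N b (A \<epsilon> (f \<epsilon>)) \<le> C * N a (f \<epsilon>)" using C M e by blast
    also have "\<dots> \<le> \<bar>C\<bar> * N a (f \<epsilon>)" using N_nn[OF a] M e by (intro mult_right_mono) auto
    also have "\<dots> \<le> \<bar>C\<bar> * D" using D e by (intro mult_left_mono) auto
    finally show ?thesis .
  qed
  then show ?thesis using M C unfolding BB_def by blast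
qed

lemma Zs_nu: "ZZ 0 f \<Longrightarrow> Zs (\<lambda>\<epsilon>. \<nu> (f \<epsilon>))"
proof -
  assume f: "ZZ 0 f"
  obtain C where C: "\<forall>x\<in>B 0. norm (\<nu> x) \<le> C * N 0 x" using nu_bdd by blast
  have M: "\<forall>\<epsilon>\<in>{0<..<1}. f \<epsilon> \<in> B 0" using f by (simp add: ZZ_def)
  have T: "((\<lambda>\<epsilon>. N 0 (f \<epsilon>)) \<longlongrightarrow> 0) (at_right 0)" using f by (simp add: ZZ_def)
  have v: "((\<lambda>\<epsilon>. C * N 0 (f \<epsilon>)) \<longlongrightarrow> 0) (at_right 0)"
    using tendsto_mult[OF tendsto_const[of C] T] by simp
  have e2: "eventually (\<lambda>\<epsilon>. norm (\<nu> (f \<epsilon>)) \<le> C * N 0 (f \<epsilon>)) (at_right 0)"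
  proof (rule eventually_mono[OF ev01])
    fix \<epsilon> :: real assume "\<epsilon> \<in> {0<..<1}"
    then have "f \<epsilon> \<in> B 0" using M by blast
    then show "norm (\<nu> (f \<epsilon>)) \<le> C * N 0 (f \<epsilon>)" using C by blast
  qed
  have e1: "eventually (\<lambda>\<epsilon>. (0::real) \<le> norm (\<nu> (f \<epsilon>))) (at_right 0)"
    by (intro always_eventually allI norm_ge_zero)
  have z: "((\<lambda>_. 0::real) \<longlongrightarrow> 0) (at_right 0)" by (rule tendsto_const)
  show ?thesis unfolding Zs_def by (rule tendsto_sandwich[OF e1 e2 z v])
qed

lemma Bs_nu: "BB 0 f \<Longrightarrow> Bs (\<lambda>\<epsilon>. \<nu> (f \<epsilon>))"
proof -
  assume f: "BB 0 f"
  obtain C where C: "\<forall>x\<in>B 0. norm (\<nu> x) \<le> C * N 0 x" using nu_bdd by blast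
  obtain D where D: "D \<ge> 0" "\<forall>\<epsilon>\<in>{0<..<1}. N 0 (f \<epsilon>) \<le> D" using BBnn[OF _ f] by auto
  have M: "\<forall>\<epsilon>\<in>{0<..<1}. f \<epsilon> \<in> B 0" using f by (simp add: BB_def)
  have "norm (\<nu> (f \<epsilon>)) \<le> \<bar>C\<bar> * D" if e: "\<epsilon> \<in> {0<..<1}" for \<epsilon>
  proof -
    have "norm (\<nu> (f \<epsilon>)) \<le> C * N 0 (f \<epsilon>)" using C M e by blast
    also have "\<dots> \<le> \<bar>C\<bar> * N 0 (f \<epsilon>)" using N_nn M e by (intro mult_right_mono) auto
    also have "\<dots> \<le> \<bar>C\<bar> * D" using D e by (intro mult_left_mono) auto
    finally show ?thesis .
  qed
  then show ?thesis unfolding Bs_def by blast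
qed

lemma Zs_add: "Zs c \<Longrightarrow> Zs d \<Longrightarrow> Zs (\<lambda>\<epsilon>. c \<epsilon> + d \<epsilon>)"
proof -
  assume c: "Zs c" and d: "Zs d"
  have e1: "eventually (\<lambda>\<epsilon>. (0::real) \<le> norm (c \<epsilon> + d \<epsilon>)) (at_right 0)" by simp
  have e2: "eventually (\<lambda>\<epsilon>. norm (c \<epsilon> + d \<epsilon>) \<le> norm (c \<epsilon>) + norm (d \<epsilon>)) (at_right 0)"
    by (intro always_eventually allI norm_triangle_ineq)
  have z: "((\<lambda>_. 0::real) \<longlongrightarrow> 0) (at_right 0)" by (rule tendsto_const)
  have v: "((\<lambda>\<epsilon>. norm (c \<epsilon>) + norm (d \<epsilon>)) \<longlongrightarrow> 0) (at_right 0)"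
    using tendsto_add[OF c[unfolded Zs_def] d[unfolded Zs_def]] by simp
  show ?thesis unfolding Zs_def by (rule tendsto_sandwich[OF e1 e2 z v])
qed

lemma Bs_add: "Bs c \<Longrightarrow> Bs d \<Longrightarrow> Bs (\<lambda>\<epsilon>. c \<epsilon> + d \<epsilon>)"
proof -
  assume c: "Bs c" and d: "Bs d"
  obtain C D where C: "\<forall>\<epsilon>\<in>{0<..<1}. norm (c \<epsilon>) \<le> C" and D: "\<forall>\<epsilon>\<in>{0<..<1}. norm (d \<epsilon>) \<le> D"
    using c d by (auto simp: Bs_def)
  have "norm (c \<epsilon> + d \<epsilon>) \<le> C + D" if "\<epsilon> \<in> {0<..<1}" for \<epsilon>
  proof -
    have "norm (c \<epsilon>) \<le> C" "norm (d \<epsilon>) \<le> D" using C D that by auto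
    then show ?thesis using norm_triangle_ineq[of "c \<epsilon>" "d \<epsilon>"] by linarith
  qed
  then show ?thesis unfolding Bs_def by blast
qed

lemma Zs_sum: "(\<And>j. j \<in> I \<Longrightarrow> Zs (c j)) \<Longrightarrow> Zs (\<lambda>\<epsilon>. \<Sum>j\<in>I. c j \<epsilon>)"
proof (induction I rule: infinite_finite_induct)
  case (infinite A) then show ?case by (simp add: Zs_def)
next
  case empty then show ?case by (simp add: Zs_def)
next
  case (insert x F)
  then show ?case using Zs_add[of "c x" "\<lambda>\<epsilon>. \<Sum>j\<in>F. c j \<epsilon>"] by simp
qed

lemma Bs_sum: "(\<And>j. j \<in> I \<Longrightarrow> Bs (c j)) \<Longrightarrow> Bs (\<lambda>\<epsilon>. \<Sum>j\<in>I. c j \<epsilon>)"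
proof (induction I rule: infinite_finite_induct)
  case (infinite A) then show ?case unfolding Bs_def by (intro exI[of _ 0]) simp
next
  case empty then show ?case unfolding Bs_def by (intro exI[of _ 0]) simp
next
  case (insert x F)
  then show ?case using Bs_add[of "c x" "\<lambda>\<epsilon>. \<Sum>j\<in>F. c j \<epsilon>"] by simp
qed

lemma ZZ_cong: "(\<And>\<epsilon>. \<epsilon> \<in> {0<..<1} \<Longrightarrow> f \<epsilon> = g \<epsilon>) \<Longrightarrow> ZZ i f \<Longrightarrow> ZZ i g"
proof -
  assume fg: "\<And>\<epsilon>. \<epsilon> \<in> {0<..<1} \<Longrightarrow> f \<epsilon> = g \<epsilon>" and f: "ZZ i f"
  have ev: "eventually (\<lambda>\<epsilon>. N i (f \<epsilon>) = N i (g \<epsilon>)) (at_right 0)"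
  proof (rule eventually_mono[OF ev01])
    fix \<epsilon> :: real assume "\<epsilon> \<in> {0<..<1}"
    then show "N i (f \<epsilon>) = N i (g \<epsilon>)" using fg by simp
  qed
  have T: "((\<lambda>\<epsilon>. N i (f \<epsilon>)) \<longlongrightarrow> 0) (at_right 0)" using f by (simp add: ZZ_def)
  have T': "((\<lambda>\<epsilon>. N i (g \<epsilon>)) \<longlongrightarrow> 0) (at_right 0)"
    using tendsto_cong[OF ev, THEN iffD1, OF T] .
  have M: "\<forall>\<epsilon>\<in>{0<..<1}. g \<epsilon> \<in> B i" using f fg by (simp add: ZZ_def)
  show ?thesis unfolding ZZ_def using M T' by (intro conjI)
qed

lemma BB_cong: "(\<And>\<epsilon>. \<epsilon> \<in> {0<..<1} \<Longrightarrow> f \<epsilon> = g \<epsilon>) \<Longrightarrow> BB i f \<Longrightarrow> BB i g"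
proof -
  assume fg: "\<And>\<epsilon>. \<epsilon> \<in> {0<..<1} \<Longrightarrow> f \<epsilon> = g \<epsilon>" and f: "BB i f"
  obtain C where C: "\<forall>\<epsilon>\<in>{0<..<1}. N i (f \<epsilon>) \<le> C" using f by (auto simp: BB_def)
  have M: "\<forall>\<epsilon>\<in>{0<..<1}. g \<epsilon> \<in> B i" using f fg by (simp add: BB_def)
  have "\<forall>\<epsilon>\<in>{0<..<1}. N i (g \<epsilon>) \<le> C" using C fg by simp
  then show ?thesis unfolding BB_def using M by blast
qed

lemma Ls_op: "j \<le> n \<Longrightarrow> j \<le> i \<Longrightarrow> i \<le> Suc n \<Longrightarrow>
  \<exists>C. \<forall>\<epsilon>\<in>{0<..<1::real}. \<forall>x\<in>B i. Ls j x \<in> B (i - j) \<and> N (i - j) (Ls j x) \<le> C * N i x"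
  using Ls_bd[of j i] Ls_maps[of j i] by blast

lemma tL_op: "j \<le> n \<Longrightarrow> j \<le> i \<Longrightarrow> i \<le> Suc n \<Longrightarrow>
  \<exists>C. \<forall>\<epsilon>\<in>{0<..<1::real}. \<forall>x\<in>B i. tL j \<epsilon> x \<in> B (i - j) \<and> N (i - j) (tL j \<epsilon> x) \<le> C * N i x"
proof -
  assume a: "j \<le> n" "j \<le> i" "i \<le> Suc n"
  obtain C where C: "\<forall>\<epsilon>\<in>{0<..<1}. maps_into (B i) (B (i - j)) (Ltil scale Leps Ls j \<epsilon>) \<and>
                        op_norm_le (N i) (B i) (N (i - j)) (Ltil scale Leps Ls j \<epsilon>) C"
    using Ltil_bdd a by blast
  then show ?thesis unfolding tL_def maps_into_def op_norm_le_def by blast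
qed

lemma Rl_op: "1 \<le> i \<Longrightarrow> i \<le> Suc n \<Longrightarrow>
  \<exists>C. \<forall>\<epsilon>\<in>{0<..<1::real}. \<forall>x\<in>B i. Rl x \<in> B i \<and> N i (Rl x) \<le> C * N i x"
proof -
  assume a: "1 \<le> i" "i \<le> Suc n"
  then have "bounded_op (N i) (B i) (N i) (B i) Rl" using Rl_bdd by blast
  then show ?thesis unfolding bounded_op_def maps_into_def op_norm_le_def by blast
qed

lemma Rl_op10: "\<exists>C. \<forall>\<epsilon>\<in>{0<..<1::real}. \<forall>x\<in>B 1. Rl x \<in> B 0 \<and> N 0 (Rl x) \<le> C * N 1 x"
  using Rl_bdd10 unfolding bounded_op_def maps_into_def op_norm_le_def by blast

lemma BB_gg: "i \<le> Suc n \<Longrightarrow> BB i gg"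
proof -
  assume i: "i \<le> Suc n"
  obtain C where "\<forall>\<epsilon>\<in>{0<..<1}. N i (scale (inverse (\<nu> (heps \<epsilon>))) (heps \<epsilon>)) \<le> C" using g_bdd i by blast
  then have "\<forall>\<epsilon>\<in>{0<..<1}. N i (gg \<epsilon>) \<le> C" by (simp add: gg_def)
  moreover have "\<forall>\<epsilon>\<in>{0<..<1}. gg \<epsilon> \<in> B i" using gg_B i by blast
  ultimately show ?thesis unfolding BB_def by blast
qed

lemma ZZ_tL:
  assumes j: "j \<le> n" "j \<le> i" "i \<le> n" and f: "BB (Suc i) f"
  shows "ZZ (i - j) (\<lambda>\<epsilon>. tL j \<epsilon> (f \<epsilon>))"
proof -
  have i1: "Suc i \<le> Suc n" "i - j \<le> Suc n" using j by auto
  obtain C where C: "C \<ge> 0" "\<forall>\<epsilon>\<in>{0<..<1}. N (Suc i) (f \<epsilon>) \<le> C" using BBnn[OF i1(1) f] by blast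
  have M: "\<forall>\<epsilon>\<in>{0<..<1}. f \<epsilon> \<in> B (Suc i)" using f by (simp add: BB_def)
  have M2: "\<forall>\<epsilon>\<in>{0<..<1}. tL j \<epsilon> (f \<epsilon>) \<in> B (i - j)"
  proof
    fix \<epsilon> :: real assume e: "\<epsilon> \<in> {0<..<1}"
    have "tL j \<epsilon> (f \<epsilon>) \<in> B (Suc i - j)" using tL_B[of j "Suc i" \<epsilon> "f \<epsilon>"] j e M by auto
    then show "tL j \<epsilon> (f \<epsilon>) \<in> B (i - j)" using memB[of _ "Suc i - j" "i - j"] j by auto
  qed
  have lim: "\<forall>\<eta>>0. \<forall>\<^sub>F \<epsilon> in at_right 0. op_norm_le (N (Suc i)) (B (Suc i)) (N (i - j)) (Ltil scale Leps Ls j \<epsilon>) \<eta>"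
    using Ltil_lim j by blast
  have "((\<lambda>\<epsilon>. N (i - j) (tL j \<epsilon> (f \<epsilon>))) \<longlongrightarrow> 0) (at_right 0)"
  proof (rule order_tendstoI)
    fix a :: real assume a: "a < 0"
    show "eventually (\<lambda>\<epsilon>. a < N (i - j) (tL j \<epsilon> (f \<epsilon>))) (at_right 0)"
    proof (rule eventually_mono[OF ev01])
      fix \<epsilon> :: real assume "\<epsilon> \<in> {0<..<1}"
      then have "0 \<le> N (i - j) (tL j \<epsilon> (f \<epsilon>))" using M2 N_nn[OF i1(2)] by blast
      then show "a < N (i - j) (tL j \<epsilon> (f \<epsilon>))" using a by linarith
    qed
  next
    fix a :: real assume a: "0 < a"
    define \<eta> where "\<eta> = a / (C + 1)"
    have \<eta>: "\<eta> > 0" using a C by (simp add: \<eta>_def)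
    have \<eta>C: "\<eta> * C < a" using a C by (simp add: \<eta>_def field_simps)
    have ev: "\<forall>\<^sub>F \<epsilon> in at_right 0. op_norm_le (N (Suc i)) (B (Suc i)) (N (i - j)) (Ltil scale Leps Ls j \<epsilon>) \<eta>"
      using lim \<eta> by blast
    show "eventually (\<lambda>\<epsilon>. N (i - j) (tL j \<epsilon> (f \<epsilon>)) < a) (at_right 0)"
      using ev ev01
    proof (rule eventually_elim2)
      fix \<epsilon> :: real
      assume op: "op_norm_le (N (Suc i)) (B (Suc i)) (N (i - j)) (Ltil scale Leps Ls j \<epsilon>) \<eta>"
        and e: "\<epsilon> \<in> {0<..<1}"
      have "N (i - j) (tL j \<epsilon> (f \<epsilon>)) \<le> \<eta> * N (Suc i) (f \<epsilon>)"
        using op M e unfolding op_norm_le_def tL_def by blast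
      also have "\<dots> \<le> \<eta> * C" using C e \<eta> by (intro mult_left_mono) auto
      finally show "N (i - j) (tL j \<epsilon> (f \<epsilon>)) < a" using \<eta>C by linarith
    qed
  qed
  then show ?thesis unfolding ZZ_def using M2 by blast
qed

lemma ZZ_Rl0:
  assumes f0: "ZZ 0 f" and f1: "BB 1 f"
  shows "ZZ 0 (\<lambda>\<epsilon>. Rl (f \<epsilon>))"
proof -
  have n1: "(1::nat) \<le> Suc n" by simp
  obtain C where C: "C \<ge> 0" "\<forall>\<epsilon>\<in>{0<..<1}. N 1 (f \<epsilon>) \<le> C" using BBnn[OF n1 f1] by blast
  have M: "\<forall>\<epsilon>\<in>{0<..<1}. f \<epsilon> \<in> B 1" using f1 by (simp add: BB_def)
  have M0: "\<forall>\<epsilon>\<in>{0<..<1}. f \<epsilon> \<in> B 0" using f0 by (simp add: ZZ_def)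
  have T: "((\<lambda>\<epsilon>. N 0 (f \<epsilon>)) \<longlongrightarrow> 0) (at_right 0)" using f0 by (simp add: ZZ_def)
  have M2: "\<forall>\<epsilon>\<in>{0<..<1}. Rl (f \<epsilon>) \<in> B 0"
  proof
    fix \<epsilon> :: real assume "\<epsilon> \<in> {0<..<1}"
    then have "f \<epsilon> \<in> D0" using M BD0[of 1] by auto
    then show "Rl (f \<epsilon>) \<in> B 0" by (rule Rl_B0)
  qed
  have "((\<lambda>\<epsilon>. N 0 (Rl (f \<epsilon>))) \<longlongrightarrow> 0) (at_right 0)"
  proof (rule order_tendstoI)
    fix a :: real assume a: "a < 0"
    show "eventually (\<lambda>\<epsilon>. a < N 0 (Rl (f \<epsilon>))) (at_right 0)"
    proof (rule eventually_mono[OF ev01])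
      fix \<epsilon> :: real assume "\<epsilon> \<in> {0<..<1}"
      then have "0 \<le> N 0 (Rl (f \<epsilon>))" using M2 N_nn[of 0] by blast
      then show "a < N 0 (Rl (f \<epsilon>))" using a by linarith
    qed
  next
    fix a :: real assume a: "0 < a"
    define \<eta> where "\<eta> = a / (2 * (C + 1))"
    have \<eta>: "\<eta> > 0" using a C by (simp add: \<eta>_def)
    have \<eta>C: "\<eta> * C < a / 2" using a C by (simp add: \<eta>_def field_simps)
    obtain c where c: "c > 0" "\<forall>g\<in>B 1. N 0 (Rl g) \<le> c * N 0 g + \<eta> * N 1 g"
      using Rl_weak \<eta> unfolding weak_bounded_def by blast
    have "a / (2 * c) > 0" using a c by simp
    then have ev: "eventually (\<lambda>\<epsilon>. N 0 (f \<epsilon>) < a / (2 * c)) (at_right 0)"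
      using order_tendstoD(2)[OF T] by blast
    show "eventually (\<lambda>\<epsilon>. N 0 (Rl (f \<epsilon>)) < a) (at_right 0)"
      using ev ev01
    proof (rule eventually_elim2)
      fix \<epsilon> :: real
      assume s: "N 0 (f \<epsilon>) < a / (2 * c)" and e: "\<epsilon> \<in> {0<..<1}"
      have "N 0 (Rl (f \<epsilon>)) \<le> c * N 0 (f \<epsilon>) + \<eta> * N 1 (f \<epsilon>)" using c M e by blast
      also have "c * N 0 (f \<epsilon>) \<le> c * (a / (2 * c))" using s c by (intro mult_left_mono) auto
      also have "c * (a / (2 * c)) = a / 2" using c by simp
      also have "\<eta> * N 1 (f \<epsilon>) \<le> \<eta> * C" using C e \<eta> by (intro mult_left_mono) auto
      finally show "N 0 (Rl (f \<epsilon>)) < a" using \<eta>C by linarith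
    qed
  qed
  then show ?thesis unfolding ZZ_def using M2 by blast
qed


lemma BB_Ls: "j \<le> n \<Longrightarrow> j \<le> i \<Longrightarrow> i \<le> Suc n \<Longrightarrow> BB i f \<Longrightarrow> BB (i - j) (\<lambda>\<epsilon>. Ls j (f \<epsilon>))"
  using BB_op[of i "i - j" "\<lambda>\<epsilon>. Ls j" f] Ls_op[of j i] by simp
lemma ZZ_Ls: "j \<le> n \<Longrightarrow> j \<le> i \<Longrightarrow> i \<le> Suc n \<Longrightarrow> ZZ i f \<Longrightarrow> ZZ (i - j) (\<lambda>\<epsilon>. Ls j (f \<epsilon>))"
  using ZZ_op[of i "i - j" "\<lambda>\<epsilon>. Ls j" f] Ls_op[of j i] by simp
lemma BB_tLop: "j \<le> n \<Longrightarrow> j \<le> i \<Longrightarrow> i \<le> Suc n \<Longrightarrow> BB i f \<Longrightarrow> BB (i - j) (\<lambda>\<epsilon>. tL j \<epsilon> (f \<epsilon>))"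
  using BB_op[of i "i - j" "\<lambda>\<epsilon>. tL j \<epsilon>" f] tL_op[of j i] by simp
lemma BB_Rl: "1 \<le> i \<Longrightarrow> i \<le> Suc n \<Longrightarrow> BB i f \<Longrightarrow> BB i (\<lambda>\<epsilon>. Rl (f \<epsilon>))"
  using BB_op[of i i "\<lambda>\<epsilon>. Rl" f] Rl_op[of i] by simp
lemma ZZ_Rl: "1 \<le> i \<Longrightarrow> i \<le> Suc n \<Longrightarrow> ZZ i f \<Longrightarrow> ZZ i (\<lambda>\<epsilon>. Rl (f \<epsilon>))"
  using ZZ_op[of i i "\<lambda>\<epsilon>. Rl" f] Rl_op[of i] by simp
lemma BB_Rl0: "BB 1 f \<Longrightarrow> BB 0 (\<lambda>\<epsilon>. Rl (f \<epsilon>))"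
  using BB_op[of 1 0 "\<lambda>\<epsilon>. Rl" f] Rl_op10 by simp

lemma Phi_fun: "Phi k = (\<lambda>\<epsilon>. scale (cc k \<epsilon>) (gg \<epsilon>) + (\<Sum>j=1..k. scale (lc j) (tg (k - j) \<epsilon>))
   - (\<Sum>j=1..k. Ls j (tg (k - j) \<epsilon>)) - tL k \<epsilon> (gg \<epsilon>))"
  by (rule ext) (simp add: Phi_def)

lemma cc_fun: "cc k = (\<lambda>\<epsilon>. (\<Sum>j=1..k. \<nu> (Ls j (tg (k - j) \<epsilon>))) + \<nu> (tL k \<epsilon> (gg \<epsilon>)))"
  by (rule ext) (simp add: cc_def)

lemma main_ind: "k \<le> n \<Longrightarrow> (\<forall>i \<le> Suc n - k. BB i (tg k)) \<and> (\<forall>i \<le> n - k. ZZ i (tg k))"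
proof (induction k rule: less_induct)
  case (less k)
  note kn = less.prems
  have IHB: "BB i (tg (k - j))" if "1 \<le> j" "j \<le> k" "i \<le> Suc n - (k - j)" for i j
    using less.IH[of "k - j"] that kn by auto
  have IHZ: "ZZ i (tg (k - j))" if "1 \<le> j" "j \<le> k" "i \<le> n - (k - j)" for i j
    using less.IH[of "k - j"] that kn by auto
  have Bscc: "Bs (cc k)"
  proof -
    have "Bs (\<lambda>\<epsilon>. \<Sum>j=1..k. \<nu> (Ls j (tg (k - j) \<epsilon>)))"
    proof (rule Bs_sum)
      fix j assume j: "j \<in> {1..k}"
      have "BB (j - j) (\<lambda>\<epsilon>. Ls j (tg (k - j) \<epsilon>))"
        using j kn by (intro BB_Ls IHB) auto
      then show "Bs (\<lambda>\<epsilon>. \<nu> (Ls j (tg (k - j) \<epsilon>)))" by (intro Bs_nu) simp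
    qed
    moreover have "Bs (\<lambda>\<epsilon>. \<nu> (tL k \<epsilon> (gg \<epsilon>)))"
    proof -
      have "BB (k - k) (\<lambda>\<epsilon>. tL k \<epsilon> (gg \<epsilon>))" using kn by (intro BB_tLop BB_gg) auto
      then show ?thesis by (intro Bs_nu) simp
    qed
    ultimately show ?thesis unfolding cc_fun by (rule Bs_add)
  qed
  have Zscc: "Zs (cc k)"
  proof -
    have "Zs (\<lambda>\<epsilon>. \<Sum>j=1..k. \<nu> (Ls j (tg (k - j) \<epsilon>)))"
    proof (rule Zs_sum)
      fix j assume j: "j \<in> {1..k}"
      have "ZZ (j - j) (\<lambda>\<epsilon>. Ls j (tg (k - j) \<epsilon>))"
        using j kn by (intro ZZ_Ls IHZ) auto
      then show "Zs (\<lambda>\<epsilon>. \<nu> (Ls j (tg (k - j) \<epsilon>)))" by (intro Zs_nu) simp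
    qed
    moreover have "Zs (\<lambda>\<epsilon>. \<nu> (tL k \<epsilon> (gg \<epsilon>)))"
    proof -
      have "ZZ (k - k) (\<lambda>\<epsilon>. tL k \<epsilon> (gg \<epsilon>))" using kn by (intro ZZ_tL BB_gg) auto
      then show ?thesis by (intro Zs_nu) simp
    qed
    ultimately show ?thesis unfolding cc_fun by (rule Zs_add)
  qed
  have BPhi: "BB i (Phi k)" if i: "i \<le> Suc n - k" for i
  proof -
    have i': "i \<le> Suc n" using i by simp
    have 1: "BB i (\<lambda>\<epsilon>. scale (cc k \<epsilon>) (gg \<epsilon>))" by (rule BB_scale[OF i' BB_gg[OF i'] Bscc])
    have 2: "BB i (\<lambda>\<epsilon>. \<Sum>j=1..k. scale (lc j) (tg (k - j) \<epsilon>))"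
    proof (rule BB_sum[OF i'])
      fix j assume j: "j \<in> {1..k}"
      have "BB i (tg (k - j))" using j i by (intro IHB) auto
      then show "BB i (\<lambda>\<epsilon>. scale (lc j) (tg (k - j) \<epsilon>))" by (rule BB_scale[OF i' _ Bs_const])
    qed
    have 3: "BB i (\<lambda>\<epsilon>. \<Sum>j=1..k. Ls j (tg (k - j) \<epsilon>))"
    proof (rule BB_sum[OF i'])
      fix j assume j: "j \<in> {1..k}"
      have "BB (i + j - j) (\<lambda>\<epsilon>. Ls j (tg (k - j) \<epsilon>))" using j i kn by (intro BB_Ls IHB) auto
      then show "BB i (\<lambda>\<epsilon>. Ls j (tg (k - j) \<epsilon>))" by simp
    qed
    have 4: "BB i (\<lambda>\<epsilon>. tL k \<epsilon> (gg \<epsilon>))"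
    proof -
      have "BB (i + k - k) (\<lambda>\<epsilon>. tL k \<epsilon> (gg \<epsilon>))" using i kn by (intro BB_tLop BB_gg) auto
      then show ?thesis by simp
    qed
    show ?thesis unfolding Phi_fun by (intro BB_diff[OF i'] BB_add[OF i'] 1 2 3 4)
  qed
  have ZPhi: "ZZ i (Phi k)" if i: "i \<le> n - k" for i
  proof -
    have i': "i \<le> Suc n" using i by simp
    have 1: "ZZ i (\<lambda>\<epsilon>. scale (cc k \<epsilon>) (gg \<epsilon>))" by (rule ZZ_scale1[OF i' BB_gg[OF i'] Zscc])
    have 2: "ZZ i (\<lambda>\<epsilon>. \<Sum>j=1..k. scale (lc j) (tg (k - j) \<epsilon>))"
    proof (rule ZZ_sum[OF i'])
      fix j assume j: "j \<in> {1..k}"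
      have "ZZ i (tg (k - j))" using j i by (intro IHZ) auto
      then show "ZZ i (\<lambda>\<epsilon>. scale (lc j) (tg (k - j) \<epsilon>))" by (rule ZZ_scale2[OF i' _ Bs_const])
    qed
    have 3: "ZZ i (\<lambda>\<epsilon>. \<Sum>j=1..k. Ls j (tg (k - j) \<epsilon>))"
    proof (rule ZZ_sum[OF i'])
      fix j assume j: "j \<in> {1..k}"
      have "ZZ (i + j - j) (\<lambda>\<epsilon>. Ls j (tg (k - j) \<epsilon>))" using j i kn by (intro ZZ_Ls IHZ) auto
      then show "ZZ i (\<lambda>\<epsilon>. Ls j (tg (k - j) \<epsilon>))" by simp
    qed
    have 4: "ZZ i (\<lambda>\<epsilon>. tL k \<epsilon> (gg \<epsilon>))"
    proof -
      have "ZZ (i + k - k) (\<lambda>\<epsilon>. tL k \<epsilon> (gg \<epsilon>))" using i kn by (intro ZZ_tL BB_gg) auto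
      then show ?thesis by simp
    qed
    show ?thesis unfolding Phi_fun by (intro ZZ_diff[OF i'] ZZ_add[OF i'] 1 2 3 4)
  qed
  have eq: "\<And>\<epsilon>. \<epsilon> \<in> {0<..<1} \<Longrightarrow> Rl (Phi k \<epsilon>) = tg k \<epsilon>" using tg_Rl kn by simp
  have "BB i (tg k)" if i: "i \<le> Suc n - k" for i
  proof (cases "i = 0")
    case True
    have "BB 0 (\<lambda>\<epsilon>. Rl (Phi k \<epsilon>))" using BPhi[of 1] kn by (intro BB_Rl0) auto
    from BB_cong[OF eq this] show ?thesis using True by simp
  next
    case False
    have "BB i (\<lambda>\<epsilon>. Rl (Phi k \<epsilon>))" using BPhi[OF i] i False by (intro BB_Rl) auto
    from BB_cong[OF eq this] show ?thesis by simp
  qed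
  moreover have "ZZ i (tg k)" if i: "i \<le> n - k" for i
  proof (cases "i = 0")
    case True
    have "ZZ 0 (\<lambda>\<epsilon>. Rl (Phi k \<epsilon>))" using BPhi[of 1] ZPhi[of 0] kn by (intro ZZ_Rl0) auto
    from ZZ_cong[OF eq this] show ?thesis using True by simp
  next
    case False
    have "ZZ i (\<lambda>\<epsilon>. Rl (Phi k \<epsilon>))" using ZPhi[OF i] i False by (intro ZZ_Rl) auto
    from ZZ_cong[OF eq this] show ?thesis by simp
  qed
  ultimately show ?case by blast
qed


lemma tg_eq: "gtil scale (\<lambda>\<epsilon>. scale (inverse (\<nu> (heps \<epsilon>))) (heps \<epsilon>))
     (gcoef scale Ls \<nu> (\<lambda>f. Rl (f - scale (\<nu> f) h)) h) k = tg k"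
proof -
  have "(\<lambda>\<epsilon>. scale (inverse (\<nu> (heps \<epsilon>))) (heps \<epsilon>)) = gg" by (rule ext) (simp add: gg_def)
  moreover have "(\<lambda>f. Rl (f - scale (\<nu> f) h)) = SS" by (rule ext) (simp add: SS_def)
  moreover have "gcoef scale Ls \<nu> SS h = gc" by (rule ext) (simp add: gc_def)
  ultimately show ?thesis by (intro ext) (simp add: tg_def)
qed

lemma main_loc:
  shows "((\<lambda>\<epsilon>. N 0 (gtil scale (\<lambda>\<epsilon>. scale (inverse (\<nu> (heps \<epsilon>))) (heps \<epsilon>))
                       (gcoef scale Ls \<nu> (\<lambda>f. Rl (f - scale (\<nu> f) h)) h) n \<epsilon>))
            \<longlongrightarrow> 0) (at_right 0)
       \<and> (\<forall>k i. k + i \<le> n \<longrightarrow>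
            ((\<lambda>\<epsilon>. N i (gtil scale (\<lambda>\<epsilon>. scale (inverse (\<nu> (heps \<epsilon>))) (heps \<epsilon>))
                       (gcoef scale Ls \<nu> (\<lambda>f. Rl (f - scale (\<nu> f) h)) h) k \<epsilon>))
             \<longlongrightarrow> 0) (at_right 0))
       \<and> (\<forall>k\<le>n. \<exists>C. \<forall>\<epsilon>\<in>{0<..<1}.
            N (Suc n - k) (gtil scale (\<lambda>\<epsilon>. scale (inverse (\<nu> (heps \<epsilon>))) (heps \<epsilon>))
                       (gcoef scale Ls \<nu> (\<lambda>f. Rl (f - scale (\<nu> f) h)) h) k \<epsilon>) \<le> C)"
proof -
  have Z: "ZZ i (tg k)" if "k + i \<le> n" for k i using main_ind[of k] that by auto
  have Bd: "BB (Suc n - k) (tg k)" if "k \<le> n" for k using main_ind[of k] that by auto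
  show ?thesis unfolding tg_eq
  proof (intro conjI allI impI)
    show "((\<lambda>\<epsilon>. N 0 (tg n \<epsilon>)) \<longlongrightarrow> 0) (at_right 0)" using Z[of n 0] by (simp add: ZZ_def)
  next
    fix k i :: nat assume "k + i \<le> n"
    then show "((\<lambda>\<epsilon>. N i (tg k \<epsilon>)) \<longlongrightarrow> 0) (at_right 0)" using Z[of k i] by (simp add: ZZ_def)
  next
    fix k :: nat assume "k \<le> n"
    then show "\<exists>C. \<forall>\<epsilon>\<in>{0<..<1}. N (Suc n - k) (tg k \<epsilon>) \<le> C" using Bd[of k] by (simp add: BB_def)
  qed
qed


end

theorem mainTheorem6:
  fixes scale :: "'k::real_normed_field \<Rightarrow> 'v::ab_group_add \<Rightarrow> 'v"
    and n :: nat
    and B :: "nat \<Rightarrow> 'v set" and N :: "nat \<Rightarrow> 'v \<Rightarrow> real"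
    and Ls :: "nat \<Rightarrow> 'v \<Rightarrow> 'v" and Leps :: "real \<Rightarrow> 'v \<Rightarrow> 'v"
    and lam :: 'k and h :: 'v and \<nu> :: "'v \<Rightarrow> 'k"
    and D0 :: "'v set" and Rl :: "'v \<Rightarrow> 'v"
    and lameps :: "real \<Rightarrow> 'k" and heps :: "real \<Rightarrow> 'v"
  assumes vs: "vector_space scale"
    \<comment> \<open>nested linear subspaces B^0 \<supseteq> ... \<supseteq> B^(n+1); (a) each is a Banach space\<close>
    and nested: "\<forall>k\<le>n. B (Suc k) \<subseteq> B k"
    and banach: "\<forall>k\<le>Suc n. banach_on scale (B k) (N k)"
    \<comment> \<open>(I)\<close>
    and condI: "\<forall>j\<le>n. \<forall>i. j \<le> i \<and> i \<le> n \<longrightarrow>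
                  maps_into (B i) (B (i - j)) (Ls j) \<and> lin_on scale (B i) (Ls j)"
    \<comment> \<open>(II)\<close>
    and L_lin: "lin_on scale (B 0) (Ls 0)"
    and lam_nz: "lam \<noteq> 0"
    and h_in: "h \<in> B (Suc n)"
    and nu_lin: "lin_fun_on scale (B 0) \<nu>"
    and nu_eig: "\<forall>f\<in>B 0. \<nu> (Ls 0 f) = lam * \<nu> f"
    and h_eig: "Ls 0 h = scale lam h"
    and nu_h: "\<nu> h = 1"
    and D0_sub: "module.subspace scale D0"
    and D0_between: "B 1 \<subseteq> D0" "D0 \<subseteq> B 0"
    and Rl_sol: "\<forall>f\<in>D0. Rl f \<in> B 0 \<and>
                   (Ls 0 (Rl f) - scale lam (scale (\<nu> (Rl f)) h)) - scale lam (Rl f) = f"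
    and Rl_uniq: "\<forall>f\<in>D0. \<forall>g\<in>B 0.
                   (Ls 0 g - scale lam (scale (\<nu> g) h)) - scale lam g = f \<longrightarrow> g = Rl f"
    and Rl_inv: "\<forall>i. 1 \<le> i \<and> i \<le> Suc n \<longrightarrow> maps_into (B i) (B i) Rl"
    \<comment> \<open>(IV), with the perturbed operators linear on B^0\<close>
    and Leps_lin: "\<forall>\<epsilon>\<in>{0<..<1}. maps_into (B 0) (B 0) (Leps \<epsilon>) \<and> lin_on scale (B 0) (Leps \<epsilon>)"
    and heps_in: "\<forall>\<epsilon>\<in>{0<..<1}. heps \<epsilon> \<in> B (Suc n)"
    and heps_eig: "\<forall>\<epsilon>\<in>{0<..<1}. Leps \<epsilon> (heps \<epsilon>) = scale (lameps \<epsilon>) (heps \<epsilon>)"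
    and nu_heps: "\<forall>\<epsilon>\<in>{0<..<1}. \<nu> (heps \<epsilon>) \<noteq> 0"
    \<comment> \<open>(b)\<close>
    and nu_bdd: "\<exists>C. \<forall>x\<in>B 0. norm (\<nu> x) \<le> C * N 0 x"
    and Lj_bdd: "\<forall>j\<le>n. \<forall>i. j \<le> i \<and> i \<le> Suc n \<longrightarrow>
                   bounded_op (N i) (B i) (N (i - j)) (B (i - j)) (Ls j)"
    and Ltil_bdd: "\<forall>j\<le>n. \<forall>i. j \<le> i \<and> i \<le> Suc n \<longrightarrow>
                   (\<exists>C. \<forall>\<epsilon>\<in>{0<..<1}. maps_into (B i) (B (i - j)) (Ltil scale Leps Ls j \<epsilon>) \<and>
                        op_norm_le (N i) (B i) (N (i - j)) (Ltil scale Leps Ls j \<epsilon>) C)"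
    and g_bdd: "\<forall>i\<le>Suc n. \<exists>C. \<forall>\<epsilon>\<in>{0<..<1}.
                   N i (scale (inverse (\<nu> (heps \<epsilon>))) (heps \<epsilon>)) \<le> C"
    and Rl_bdd10: "bounded_op (N 1) (B 1) (N 0) (B 0) Rl"
    and Rl_bdd: "\<forall>i. 1 \<le> i \<and> i \<le> Suc n \<longrightarrow> bounded_op (N i) (B i) (N i) (B i) Rl"
    and Rl_weak: "weak_bounded (N 0) (N 1) (B 1) Rl"
    \<comment> \<open>(c)\<close>
    and Ltil_lim: "\<forall>j\<le>n. \<forall>i. j \<le> i \<and> i \<le> n \<longrightarrow>
                   (\<forall>\<^sub>F \<epsilon> in at_right 0. maps_into (B (Suc i)) (B (i - j)) (Ltil scale Leps Ls j \<epsilon>)) \<and>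
                   (\<forall>\<eta>>0. \<forall>\<^sub>F \<epsilon> in at_right 0.
                        op_norm_le (N (Suc i)) (B (Suc i)) (N (i - j)) (Ltil scale Leps Ls j \<epsilon>) \<eta>)"
  shows "((\<lambda>\<epsilon>. N 0 (gtil scale (\<lambda>\<epsilon>. scale (inverse (\<nu> (heps \<epsilon>))) (heps \<epsilon>))
                       (gcoef scale Ls \<nu> (\<lambda>f. Rl (f - scale (\<nu> f) h)) h) n \<epsilon>))
            \<longlongrightarrow> 0) (at_right 0)
       \<and> (\<forall>k i. k + i \<le> n \<longrightarrow>
            ((\<lambda>\<epsilon>. N i (gtil scale (\<lambda>\<epsilon>. scale (inverse (\<nu> (heps \<epsilon>))) (heps \<epsilon>))
                       (gcoef scale Ls \<nu> (\<lambda>f. Rl (f - scale (\<nu> f) h)) h) k \<epsilon>))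
             \<longlongrightarrow> 0) (at_right 0))
       \<and> (\<forall>k\<le>n. \<exists>C. \<forall>\<epsilon>\<in>{0<..<1}.
            N (Suc n - k) (gtil scale (\<lambda>\<epsilon>. scale (inverse (\<nu> (heps \<epsilon>))) (heps \<epsilon>))
                       (gcoef scale Ls \<nu> (\<lambda>f. Rl (f - scale (\<nu> f) h)) h) k \<epsilon>) \<le> C)"
proof -
  interpret c: ctx scale n B N Ls Leps lam h \<nu> D0 Rl lameps heps
    by (intro ctx.intro) (fact assms)+
  show ?thesis by (rule c.main_loc)
qed

end
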